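(* Let $K$ be a field with a non-Archimedean valuation $\mathrm{val}:K\to\mathbb{T}$, let $n\ge1$, let $Q=(V,A,s,t)$ be a finite quiver and $R$ a $Q$-representation with $R_i=K^n$ for all $i\in V$, where each arrow $\alpha$ is represented by a weakly monomial matrix $A^{\alpha}\in K^{n\times n}$. Let $\mathbf{d}=(d_i)_{i\in V}$ with $0\le d_i\le n$ and let $\boldsymbol{\mu}=(\mu_i)_{i\in V}$ be valuated matroids on $[n]$ with $\mu_i$ of rank $d_i$. Then the following are equivalent: (a) $\boldsymbol{\mu}\in\operatorname{QDr}(R,\mathbf{d};n)$; (b) $\mathrm{val}(A^{\alpha})\odot\overline{\operatorname{trop}}(\mu_{s(\alpha)})\subseteq\overline{\operatorname{trop}}(\mu_{t(\alpha)})$ for all $\alpha\in A$; (c) for every arrow $\alpha$, the map $f_\alpha$ associated to $A^\alpha$ is a (contravariant) affine morphism of valuated matroids from $\mu_{t(\alpha)}$ to $\mu_{s(\alpha)}$, i.e. $f_\alpha^{-1}(\mu_{s(\alpha)})\twoheadleftarrow(\mu_{t(\alpha)})_o$.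
   Context: Tropical conventions: $\mathbb{T}=\mathbb{R}\cup\{\infty\}$, $a\oplus b=\min$, $a\odot b=a+b$, $\mathbb{P}(\mathbb{T}^N)=(\mathbb{T}^N\setminus\{(\infty,\dots,\infty)\})/\mathbb{R}\mathbf{1}$; $\mathrm{val}(0)=\infty$; for a matrix $M$, $(\mathrm{val}(M)\odot v)_i=\min_j(\mathrm{val}(M_{ij})+v_j)$, applied pointwise to sets. Valuated matroid of rank $r$ on a finite set $E$: $\nu:\binom{E}{r}\to\mathbb{T}$, not identically $\infty$, such that for all $I,J\in\binom{E}{r}$, $i\in I\setminus J$ there is $j\in J\setminus I$ with $\nu(I)+\nu(J)\ge\nu((I\setminus i)\cup j)+\nu((J\setminus j)\cup i)$; considered up to additive constants. Convention: $\nu(S)=\infty$ if $|S|\ne r$. Tropical linear space $\overline{\operatorname{trop}}(\nu)\subseteq\mathbb{P}(\mathbb{T}^E)$: the set of $x$ such that for each $I\in\binom{E}{r+1}$ with $C_\nu(I)\ne(\infty,\dots)$ (where $C_\nu(I)_e=\nu(I\setminus e)$ for $e\in I$, $\infty$ else), $\min_e(C_\nu(I)_e+x_e)$ is attained at least twice ($\infty$ counts as twice). Quotient: for $\mu,\nu$ on $E$ of ranks $r\le s$, $\mu\twoheadleftarrow\nu$ if for all $I\in\binom{E}{r}$, $J\in\binom{E}{s}$, $i\in I\setminus J$ there is $j\in J\setminus I$ with $\mu(I)+\nu(J)\ge\mu(I\cup j\setminus i)+\nu(J\cup i\setminus j)$. Pointed matroid: for $\nu$ on $[n]$, $\nu_o$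 on $[n]\cup\{o\}$ agrees with $\nu$ on sets avoiding $o$ and is $\infty$ on sets containing $o$ (so $o$ is a loop). For $f=(f_1,f_2):[n]\cup\{o\}\to([n]\cup\{o\})\times\mathbb{T}$ with $S=f_1([n]\cup\{o\})$, let $\nu_o|_S$ be the restriction of the valuated matroid $\nu_o$ to $S$, of rank $r'$. The affine induced valuated matroid is $f^{-1}(\nu)(B)=\nu_o|_S(f_1(B))+\sum_{i\in B}f_2(i)$ for $B\subseteq[n]\cup\{o\}$, $|B|=r'$ (value $\infty$ if $|f_1(B)|<r'$). $f$ is an affine morphism of valuated matroids from $\mu$ to $\nu$ if $f^{-1}(\nu)\twoheadleftarrow\mu_o$. A matrix is weakly monomial if each row has at most one nonzero entry. The map associated to a weakly monomial $M\in K^{n\times n}$ is $f(o)=(o,\infty)$, $f(i)=(o,\infty)$ if row $i$ is zero, and $f(i)=(j,\mathrm{val}(M_{ij}))$ if $M_{ij}\ne0$. Quiver Dressian $\operatorname{QDr}(R,\mathbf{d};n)$: tuples $(p^{(i)})_{i\in V}$, $p^{(i)}\in\mathbb{P}(\mathbb{T}^{\binom{n}{d_i}})$, such that for each vertex $i$ ($r=d_i$) and $I\in\binom{[n]}{r-1}$, $J\in\binom{[n]}{r+1}$, $\min_{j\in J\setminus I}(p^{(i)}_{I\cup j}+p^{(i)}_{J\setminus j})$ is attained at least twice, and for each arrow $\alpha$ ($r=d_{s(\alpha)}$, $s=d_{t(\alpha)}$) and $I\in\binom{[n]}{r-1}$, $J\in\binom{[n]}{s+1}$, $\min_{j\in[n]\setminus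 I,i\in J}(\mathrm{val}(A^\alpha_{i,j})+p^{(s(\alpha))}_{I\cup j}+p^{(t(\alpha))}_{J\setminus i})$ is attained at least twice ($\infty$ counts as twice). *)

theory Defs
  imports "HOL-Library.Extended_Real"
begin

text \<open>Tropical numbers T = R \<union> {\<infinity>} are represented by extended reals that are never
  \<open>-\<infinity>\<close>; tropical addition is \<open>min\<close>, tropical multiplication is \<open>+\<close>.
  The ground set [n] is {1..n}; the extra point o of pointed matroids is 0.\<close>

definition min_twice :: "'b set \<Rightarrow> ('b \<Rightarrow> ereal) \<Rightarrow> bool" where
  "min_twice S g \<longleftrightarrow> (\<forall>k\<in>S. g k = \<infinity>) \<or>
     (\<exists>a\<in>S. \<exists>b\<in>S. a \<noteq> b \<and> g a = g b \<and> (\<forall>k\<in>S. g a \<le> g k))"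

definition valuation :: "('k::field \<Rightarrow> ereal) \<Rightarrow> bool" where
  "valuation v \<longleftrightarrow> v 0 = \<infinity> \<and> (\<forall>x. x \<noteq> 0 \<longrightarrow> v x \<noteq> \<infinity> \<and> v x \<noteq> -\<infinity>) \<and>
     (\<forall>x y. v (x * y) = v x + v y) \<and> (\<forall>x y. min (v x) (v y) \<le> v (x + y))"

definition valuated_matroid :: "'e set \<Rightarrow> nat \<Rightarrow> ('e set \<Rightarrow> ereal) \<Rightarrow> bool" where
  "valuated_matroid E r \<nu> \<longleftrightarrow> finite E \<and> (\<forall>S. \<nu> S \<noteq> -\<infinity>) \<and>
     (\<forall>S. \<not> (S \<subseteq> E \<and> card S = r) \<longrightarrow> \<nu> S = \<infinity>) \<and> (\<exists>B. \<nu> B \<noteq> \<infinity>) \<and>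
     (\<forall>I J i. I \<subseteq> E \<and> card I = r \<and> J \<subseteq> E \<and> card J = r \<and> i \<in> I - J \<longrightarrow>
        (\<exists>j\<in>J - I. \<nu> I + \<nu> J \<ge> \<nu> (insert j (I - {i})) + \<nu> (insert i (J - {j}))))"

text \<open>Tropical linear space, as the set of representatives x : E \<rightarrow> T (not all \<infinity>;
  normalised to \<infinity> outside E) of points of P(T^E). The defining condition is
  invariant under adding constants, so this is the preimage of the projective set.\<close>
definition trop_space :: "'e set \<Rightarrow> nat \<Rightarrow> ('e set \<Rightarrow> ereal) \<Rightarrow> ('e \<Rightarrow> ereal) set" where
  "trop_space E r \<nu> = {x. (\<forall>e. x e \<noteq> -\<infinity>) \<and> (\<forall>e. e \<notin> E \<longrightarrow> x e = \<infinity>) \<and> (\<exists>e\<in>E. x e \<noteq> \<infinity>) \<and>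
     (\<forall>I. I \<subseteq> E \<and> card I = Suc r \<and> (\<exists>e\<in>I. \<nu> (I - {e}) \<noteq> \<infinity>) \<longrightarrow>
        min_twice I (\<lambda>e. \<nu> (I - {e}) + x e))}"

definition trop_mat_vec :: "('k \<Rightarrow> ereal) \<Rightarrow> nat \<Rightarrow> (nat \<Rightarrow> nat \<Rightarrow> 'k) \<Rightarrow> (nat \<Rightarrow> ereal) \<Rightarrow> nat \<Rightarrow> ereal" where
  "trop_mat_vec val n M x = (\<lambda>i. if i \<in> {1..n} then (INF j\<in>{1..n}. val (M i j) + x j) else \<infinity>)"

definition weakly_monomial :: "nat \<Rightarrow> (nat \<Rightarrow> nat \<Rightarrow> 'k::zero) \<Rightarrow> bool" where
  "weakly_monomial n M \<longleftrightarrow>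
     (\<forall>i\<in>{1..n}. \<forall>j\<in>{1..n}. \<forall>k\<in>{1..n}. M i j \<noteq> 0 \<and> M i k \<noteq> 0 \<longrightarrow> j = k)"

definition QDr :: "('k::field \<Rightarrow> ereal) \<Rightarrow> nat \<Rightarrow> 'v set \<Rightarrow> 'a set \<Rightarrow> ('a \<Rightarrow> 'v) \<Rightarrow> ('a \<Rightarrow> 'v)
    \<Rightarrow> ('a \<Rightarrow> nat \<Rightarrow> nat \<Rightarrow> 'k) \<Rightarrow> ('v \<Rightarrow> nat) \<Rightarrow> ('v \<Rightarrow> nat set \<Rightarrow> ereal) \<Rightarrow> bool" where
  "QDr val n V Arr s t A d p \<longleftrightarrow>
     (\<forall>i\<in>V. (\<forall>S. p i S \<noteq> -\<infinity>) \<and> (\<forall>S. \<not> (S \<subseteq> {1..n} \<and> card S = d i) \<longrightarrow> p i S = \<infinity>) \<and>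
        (\<exists>S. p i S \<noteq> \<infinity>)) \<and>
     (\<forall>i\<in>V. \<forall>I J. 1 \<le> d i \<and> I \<subseteq> {1..n} \<and> card I = d i - 1 \<and> J \<subseteq> {1..n} \<and> card J = d i + 1 \<longrightarrow>
        min_twice (J - I) (\<lambda>j. p i (insert j I) + p i (J - {j}))) \<and>
     (\<forall>\<alpha>\<in>Arr. \<forall>I J. 1 \<le> d (s \<alpha>) \<and> I \<subseteq> {1..n} \<and> card I = d (s \<alpha>) - 1 \<and>
        J \<subseteq> {1..n} \<and> card J = d (t \<alpha>) + 1 \<longrightarrow>
        min_twice (({1..n} - I) \<times> J)
          (\<lambda>(j, i). val (A \<alpha> i j) + p (s \<alpha>) (insert j I) + p (t \<alpha>) (J - {i})))"

definition pointed :: "(nat set \<Rightarrow> ereal) \<Rightarrow> nat set \<Rightarrow> ereal" where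
  "pointed \<nu> = (\<lambda>S. if 0 \<in> S then \<infinity> else \<nu> S)"

definition restr_rank :: "'e set \<Rightarrow> ('e set \<Rightarrow> ereal) \<Rightarrow> 'e set \<Rightarrow> nat" where
  "restr_rank E \<nu> S = Max {card (B \<inter> S) | B. B \<subseteq> E \<and> \<nu> B \<noteq> \<infinity>}"

definition restrict_vm :: "'e set \<Rightarrow> ('e set \<Rightarrow> ereal) \<Rightarrow> 'e set \<Rightarrow> 'e set \<Rightarrow> ereal" where
  "restrict_vm E \<nu> S B = (if B \<subseteq> S \<and> card B = restr_rank E \<nu> S
      then (INF C\<in>Pow (E - S). \<nu> (B \<union> C)) else \<infinity>)"

definition assoc_map :: "('k::zero \<Rightarrow> ereal) \<Rightarrow> nat \<Rightarrow> (nat \<Rightarrow> nat \<Rightarrow> 'k) \<Rightarrow> nat \<Rightarrow> nat \<times> ereal" where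
  "assoc_map val n M i = (if i \<in> {1..n} \<and> (\<exists>j\<in>{1..n}. M i j \<noteq> 0)
      then (let j = (THE j. j \<in> {1..n} \<and> M i j \<noteq> 0) in (j, val (M i j)))
      else (0, \<infinity>))"

definition affine_rank :: "('k::zero \<Rightarrow> ereal) \<Rightarrow> nat \<Rightarrow> (nat \<Rightarrow> nat \<Rightarrow> 'k) \<Rightarrow> (nat set \<Rightarrow> ereal) \<Rightarrow> nat" where
  "affine_rank val n M \<nu> =
     restr_rank {0..n} (pointed \<nu>) (fst ` assoc_map val n M ` {0..n})"

definition affine_induced :: "('k::zero \<Rightarrow> ereal) \<Rightarrow> nat \<Rightarrow> (nat \<Rightarrow> nat \<Rightarrow> 'k) \<Rightarrow> (nat set \<Rightarrow> ereal)
    \<Rightarrow> nat set \<Rightarrow> ereal" where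
  "affine_induced val n M \<nu> B =
     (let f = assoc_map val n M; S = fst ` f ` {0..n}; r' = affine_rank val n M \<nu> in
      if B \<subseteq> {0..n} \<and> card B = r' \<and> card (fst ` f ` B) = r'
      then restrict_vm {0..n} (pointed \<nu>) S (fst ` f ` B) + (\<Sum>i\<in>B. snd (f i))
      else \<infinity>)"

definition vm_quotient :: "'e set \<Rightarrow> nat \<Rightarrow> ('e set \<Rightarrow> ereal) \<Rightarrow> nat \<Rightarrow> ('e set \<Rightarrow> ereal) \<Rightarrow> bool" where
  "vm_quotient E r \<mu> s \<nu> \<longleftrightarrow> r \<le> s \<and>
     (\<forall>I J i. I \<subseteq> E \<and> card I = r \<and> J \<subseteq> E \<and> card J = s \<and> i \<in> I - J \<longrightarrow>
        (\<exists>j\<in>J - I. \<mu> I + \<nu> J \<ge> \<mu> (insert j (I - {i})) + \<nu> (insert i (J - {j}))))"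

definition affine_morphism :: "('k::zero \<Rightarrow> ereal) \<Rightarrow> nat \<Rightarrow> (nat \<Rightarrow> nat \<Rightarrow> 'k) \<Rightarrow> nat
    \<Rightarrow> (nat set \<Rightarrow> ereal) \<Rightarrow> (nat set \<Rightarrow> ereal) \<Rightarrow> bool" where
  "affine_morphism val n M r\<mu> \<mu> \<nu> \<longleftrightarrow>
     vm_quotient {0..n} (affine_rank val n M \<nu>) (affine_induced val n M \<nu>) r\<mu> (pointed \<mu>)"

end

theory Submission
  imports Defs
begin

lemma mt_iff:
  assumes "finite S"
  shows "min_twice S g \<longleftrightarrow> (\<forall>a\<in>S. g a \<noteq> \<infinity> \<longrightarrow> (\<exists>b\<in>S. b \<noteq> a \<and> g b \<le> g a))"
proof
  assume "min_twice S g"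
  then consider "\<forall>k\<in>S. g k = \<infinity>" | a' b' where "a'\<in>S" "b'\<in>S" "a' \<noteq> b'" "g a' = g b'" "\<forall>k\<in>S. g a' \<le> g k"
    unfolding min_twice_def by blast
  then show "\<forall>a\<in>S. g a \<noteq> \<infinity> \<longrightarrow> (\<exists>b\<in>S. b \<noteq> a \<and> g b \<le> g a)"
  proof cases
    case 1 then show ?thesis by auto
  next
    case 2
    show ?thesis
    proof (intro ballI impI)
      fix a assume "a \<in> S"
      show "\<exists>b\<in>S. b \<noteq> a \<and> g b \<le> g a"
      proof (cases "a = a'")
        case True then show ?thesis using 2 \<open>a\<in>S\<close> by (intro bexI[of _ b']) auto
      next
        case False then show ?thesis using 2 \<open>a\<in>S\<close> by (intro bexI[of _ a']) auto
      qed
    qed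
  qed
next
  assume R: "\<forall>a\<in>S. g a \<noteq> \<infinity> \<longrightarrow> (\<exists>b\<in>S. b \<noteq> a \<and> g b \<le> g a)"
  show "min_twice S g"
  proof (cases "\<forall>k\<in>S. g k = \<infinity>")
    case True then show ?thesis unfolding min_twice_def by blast
  next
    case False
    then obtain a0 where a0: "a0 \<in> S" "g a0 \<noteq> \<infinity>" by blast
    define a where "a = arg_min_on g S"
    have aS: "a \<in> S" using a0 assms unfolding a_def by (intro arg_min_if_finite) auto
    have amin: "\<forall>k\<in>S. g a \<le> g k" using a0 assms unfolding a_def by (auto intro: arg_min_least)
    have "g a \<le> g a0" using amin a0 by auto
    then have "g a \<noteq> \<infinity>" using a0(2) by auto
    then obtain b where "b \<in> S" "b \<noteq> a" "g b \<le> g a" using R aS by blast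
    then have "g a = g b" using amin by (simp add: order_antisym)
    then show ?thesis unfolding min_twice_def using aS amin \<open>b \<in> S\<close> \<open>b \<noteq> a\<close> by metis
  qed
qed

lemma inf_attained:
  fixes f :: "'a \<Rightarrow> ereal"
  assumes "finite A" "A \<noteq> {}"
  shows "\<exists>a\<in>A. (INF x\<in>A. f x) = f a"
proof -
  have "Min (f ` A) = Inf (f ` A)" using assms by (intro Min_Inf) auto
  moreover have "Min (f ` A) \<in> f ` A" using assms by (intro Min_in) auto
  ultimately show ?thesis by auto
qed

lemma vm_fin:
  assumes "valuated_matroid E r P" "P B \<noteq> \<infinity>"
  shows "B \<subseteq> E" "card B = r"
  using assms unfolding valuated_matroid_def by blast+

lemma vm_ninf:
  assumes "valuated_matroid E r P"
  shows "P B \<noteq> -\<infinity>"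
  using assms unfolding valuated_matroid_def by blast

lemma vm_exch:
  assumes "valuated_matroid E r P" "I \<subseteq> E" "card I = r" "J \<subseteq> E" "card J = r" "i \<in> I - J"
  shows "\<exists>j\<in>J - I. P I + P J \<ge> P (insert j (I - {i})) + P (insert i (J - {j}))"
  using assms unfolding valuated_matroid_def by blast

lemma pluecker:
  assumes vm: "valuated_matroid E r P" and "1 \<le> r" and I: "I \<subseteq> E" "card I = r - 1"
    and K: "K \<subseteq> E" "card K = r + 1"
  shows "\<forall>a\<in>K - I. P (insert a I) + P (K - {a}) \<noteq> \<infinity> \<longrightarrow>
           (\<exists>b\<in>K - I. b \<noteq> a \<and> P (insert b I) + P (K - {b}) \<le> P (insert a I) + P (K - {a}))"
proof (intro ballI impI)
  fix a assume a: "a \<in> K - I" and fin: "P (insert a I) + P (K - {a}) \<noteq> \<infinity>"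
  have f1: "P (insert a I) \<noteq> \<infinity>" "P (K - {a}) \<noteq> \<infinity>" using fin by auto
  have fE: "finite E" using vm unfolding valuated_matroid_def by blast
  have c1: "card (insert a I) = r" using vm_fin[OF vm f1(1)] by simp
  have c2: "card (K - {a}) = r" using vm_fin[OF vm f1(2)] by simp
  have s1: "insert a I \<subseteq> E" "K - {a} \<subseteq> E" using a I K by auto
  obtain j where j: "j \<in> (K - {a}) - insert a I"
    and ex: "P (insert a I) + P (K - {a}) \<ge> P (insert j (insert a I - {a})) + P (insert a ((K - {a}) - {j}))"
    using vm_exch[OF vm s1(1) c1 s1(2) c2, of a] a by auto
  have e1: "insert j (insert a I - {a}) = insert j I" using a by auto
  have e2: "insert a ((K - {a}) - {j}) = K - {j}" using a j by auto
  show "\<exists>b\<in>K - I. b \<noteq> a \<and> P (insert b I) + P (K - {b}) \<le> P (insert a I) + P (K - {a})"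
    using j ex e1 e2 by (intro bexI[of _ j]) auto
qed


lemma ereal_fin: "(a::ereal) \<noteq> \<infinity> \<Longrightarrow> a \<noteq> -\<infinity> \<Longrightarrow> a = ereal (real_of_ereal a)"
  by (cases a) auto

lemma trop_ninf: "x \<in> trop_space E r P \<Longrightarrow> x e \<noteq> -\<infinity>"
  unfolding trop_space_def by blast

lemma trop_mt:
  assumes "x \<in> trop_space E r P" "I \<subseteq> E" "card I = Suc r" "\<exists>e\<in>I. P (I - {e}) \<noteq> \<infinity>"
  shows "min_twice I (\<lambda>e. P (I - {e}) + x e)"
  using assms unfolding trop_space_def by blast

lemma e4_less:
  fixes a b c d :: ereal
  assumes "\<bar>a\<bar> \<noteq> \<infinity>" "\<bar>b\<bar> \<noteq> \<infinity>" "\<bar>c\<bar> \<noteq> \<infinity>" "\<bar>d\<bar> \<noteq> \<infinity>"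
    "real_of_ereal a + real_of_ereal b < real_of_ereal c + real_of_ereal d"
  shows "a + b < c + d"
  using assms by (cases a; cases b; cases c; cases d) auto

lemma e4_le:
  fixes a b c d :: ereal
  assumes "\<bar>a\<bar> \<noteq> \<infinity>" "\<bar>b\<bar> \<noteq> \<infinity>" "\<bar>c\<bar> \<noteq> \<infinity>" "\<bar>d\<bar> \<noteq> \<infinity>"
    "real_of_ereal a + real_of_ereal b \<le> real_of_ereal c + real_of_ereal d"
  shows "a + b \<le> c + d"
  using assms by (cases a; cases b; cases c; cases d) auto

lemma cocirc:
  fixes n :: nat and P :: "nat set \<Rightarrow> ereal"
  assumes vm: "valuated_matroid {1..n} r P" and x: "x \<in> trop_space {1..n} r P"
    and S': "S' \<subseteq> {1..n}" and rr1: "\<exists>B. P B \<noteq> \<infinity> \<and> card (B \<inter> S') = rr"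
    and rr2: "\<forall>B. P B \<noteq> \<infinity> \<longrightarrow> card (B \<inter> S') \<le> rr"
    and d0: "d0 \<in> S'" "x d0 \<noteq> \<infinity>"
  shows "\<exists>B. P B \<noteq> \<infinity> \<and> d0 \<in> B \<and> card (B \<inter> S') = rr \<and>
     (\<forall>d\<in>S'. \<forall>C. C \<subseteq> {1..n} - S' \<longrightarrow> d \<notin> B \<inter> S' - {d0} \<longrightarrow>
        x d + P B \<le> x d0 + P (insert d (B \<inter> S' - {d0}) \<union> C))"
proof -
  define D where "D = {d\<in>S'. x d = \<infinity>}"
  define B0 where "B0 = {B. P B \<noteq> \<infinity> \<and> card (B \<inter> S') = rr}"
  have B0sub: "B0 \<subseteq> Pow {1..n}" unfolding B0_def using vm_fin(1)[OF vm] by blast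
  have fB0: "finite B0" by (rule finite_subset[OF B0sub]) simp
  have neB0: "B0 \<noteq> {}" using rr1 unfolding B0_def by blast
  define a where "a = Max ((\<lambda>B. card (B \<inter> D)) ` B0)"
  have amax: "\<And>B. B \<in> B0 \<Longrightarrow> card (B \<inter> D) \<le> a" unfolding a_def using fB0 by auto
  define BB where "BB = {B\<in>B0. card (B \<inter> D) = a}"
  have "a \<in> (\<lambda>B. card (B \<inter> D)) ` B0" unfolding a_def using fB0 neB0 by (intro Max_in) auto
  then have neBB: "BB \<noteq> {}" unfolding BB_def by auto
  have fBB: "finite BB" using fB0 unfolding BB_def by auto
  define rx where "rx = (\<lambda>e. real_of_ereal (x e))"
  define \<Phi> where "\<Phi> = (\<lambda>B. real_of_ereal (P B) - (\<Sum>e\<in>B \<inter> S' - D. rx e))"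
  define MM where "MM = {B\<in>BB. \<forall>B'\<in>BB. \<Phi> B \<le> \<Phi> B'}"
  have xfin: "\<And>e. e \<in> S' \<Longrightarrow> e \<notin> D \<Longrightarrow> x e = ereal (rx e)"
    unfolding rx_def D_def using trop_ninf[OF x] by (intro ereal_fin) auto
  have Pfin: "\<And>B. P B \<noteq> \<infinity> \<Longrightarrow> P B = ereal (real_of_ereal (P B))"
    using vm_ninf[OF vm] by (intro ereal_fin) auto
  have d0D: "d0 \<notin> D" unfolding D_def using d0 by auto
  have finB: "\<And>B. P B \<noteq> \<infinity> \<Longrightarrow> finite B"
    using vm_fin(1)[OF vm] by (meson finite_subset finite_atLeastAtMost)
  have exMM: "\<exists>B\<in>MM. d0 \<in> B"
  proof (rule ccontr)
    assume H: "\<not> (\<exists>B\<in>MM. d0 \<in> B)"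
    define B where "B = arg_min_on \<Phi> BB"
    have BBB: "B \<in> BB" unfolding B_def using fBB neBB by (rule arg_min_if_finite)
    have Bmin: "\<forall>B'\<in>BB. \<Phi> B \<le> \<Phi> B'" unfolding B_def using fBB neBB by (auto intro: arg_min_least)
    have BMM: "B \<in> MM" unfolding MM_def using BBB Bmin by auto
    have d0B: "d0 \<notin> B" using H BMM by auto
    have PB: "P B \<noteq> \<infinity>" and cB: "card (B \<inter> S') = rr" and cBD: "card (B \<inter> D) = a"
      using BBB unfolding BB_def B0_def by auto
    have Bsub: "B \<subseteq> {1..n}" "card B = r" using vm_fin[OF vm PB] by auto
    have finBs: "finite B" using Bsub by (meson finite_subset finite_atLeastAtMost)
    define K where "K = insert d0 B"
    have Ksub: "K \<subseteq> {1..n}" "card K = Suc r" using Bsub d0 S' d0B finBs unfolding K_def by auto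
    have KB: "K - {d0} = B" unfolding K_def using d0B by auto
    have mt: "min_twice K (\<lambda>e. P (K - {e}) + x e)"
      using trop_mt[OF x Ksub] KB PB unfolding K_def by auto
    have fK: "finite K" using Ksub by (meson finite_subset finite_atLeastAtMost)
    have fin0: "P (K - {d0}) + x d0 \<noteq> \<infinity>" using KB PB d0 by auto
    have mt2: "\<forall>a\<in>K. P (K - {a}) + x a \<noteq> \<infinity> \<longrightarrow> (\<exists>b\<in>K. b \<noteq> a \<and> P (K - {b}) + x b \<le> P (K - {a}) + x a)"
      using mt mt_iff[OF fK] by simp
    have "d0 \<in> K" unfolding K_def by simp
    then obtain g where g: "g \<in> K" "g \<noteq> d0" "P (K - {g}) + x g \<le> P (K - {d0}) + x d0"
      using mt2 fin0 by blast
    have gB: "g \<in> B" using g unfolding K_def by auto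
    have "P (K - {g}) + x g \<noteq> \<infinity>" using g(3) fin0 by auto
    then have Pg: "P (K - {g}) \<noteq> \<infinity>" "x g \<noteq> \<infinity>" by auto
    define B' where "B' = K - {g}"
    have B'eq: "B' = insert d0 (B - {g})" unfolding B'_def K_def using g by auto
    show False
    proof (cases "g \<in> S'")
      case False
      have "B' \<inter> S' = insert d0 (B \<inter> S')" using B'eq False d0 by auto
      then have "card (B' \<inter> S') = Suc rr" using cB d0B finBs by auto
      moreover have "card (B' \<inter> S') \<le> rr" using rr2 Pg(1) unfolding B'_def by blast
      ultimately show False by simp
    next
      case True
      have gD: "g \<notin> D" using Pg D_def by auto
      have e1: "B' \<inter> S' = insert d0 (B \<inter> S' - {g})" using B'eq True d0 by auto
      have "card (B \<inter> S') > 0" using finBs True gB by (auto simp: card_gt_0_iff)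
      have c1: "card (B' \<inter> S') = rr" unfolding e1 using \<open>card (B \<inter> S') > 0\<close> cB d0B finBs True gB by (simp add: card_Diff_singleton)
      have e2: "B' \<inter> D = B \<inter> D" using B'eq gD d0D by auto
      have B'BB: "B' \<in> BB" unfolding BB_def B0_def using c1 e2 cBD Pg B'_def by auto
      have "B' \<notin> MM" using H B'eq by auto
      then obtain B'' where B''1: "B'' \<in> BB" "\<Phi> B'' < \<Phi> B'" using B'BB unfolding MM_def by (auto simp: not_le)
      have lt: "\<Phi> B < \<Phi> B'" using Bmin B''1 by (meson order_le_less_trans)
      have e3: "B' \<inter> S' - D = insert d0 ((B \<inter> S' - D) - {g})" using e1 d0D by auto
      have sB': "(\<Sum>e\<in>B' \<inter> S' - D. rx e) = rx d0 + ((\<Sum>e\<in>B \<inter> S' - D. rx e) - rx g)"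
        unfolding e3 using finBs d0B gB True gD by (simp add: sum_diff1)
      have "real_of_ereal (P B) + rx d0 < real_of_ereal (P B') + rx g"
        using lt sB' unfolding \<Phi>_def by simp
      then have "P B + x d0 < P B' + x g"
        using e4_less[of "P B" "x d0" "P B'" "x g"] Pg PB vm_ninf[OF vm] trop_ninf[OF x] d0 unfolding B'_def rx_def
        by auto
      then show False using g(3) KB unfolding B'_def by auto
    qed
  qed
  then obtain B where BMM: "B \<in> MM" and d0B: "d0 \<in> B" by blast
  have PB: "P B \<noteq> \<infinity>" and cB: "card (B \<inter> S') = rr" and cBD: "card (B \<inter> D) = a"
    and Bmin: "\<forall>B'\<in>BB. \<Phi> B \<le> \<Phi> B'"
    using BMM unfolding MM_def BB_def B0_def by auto
  have fBs: "finite B" using finB PB by auto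
  show ?thesis
  proof (intro exI conjI allI ballI impI)
    show "P B \<noteq> \<infinity>" "d0 \<in> B" "card (B \<inter> S') = rr" by fact+
    fix d C assume dS: "d \<in> S'" and C: "C \<subseteq> {1..n} - S'" and dn: "d \<notin> B \<inter> S' - {d0}"
    define B'' where "B'' = insert d (B \<inter> S' - {d0}) \<union> C"
    show "x d + P B \<le> x d0 + P (insert d (B \<inter> S' - {d0}) \<union> C)"
    proof (cases "P B'' = \<infinity>")
      case True then show ?thesis unfolding B''_def using d0 by auto
    next
      case False
      have e1: "B'' \<inter> S' = insert d (B \<inter> S' - {d0})" unfolding B''_def using C dS by auto
      have "B \<inter> S' \<noteq> {}" using d0B d0 by auto
      then have "card (B \<inter> S') > 0" using fBs by (simp add: card_gt_0_iff)
      have c1: "card (B'' \<inter> S') = rr" using \<open>card (B \<inter> S') > 0\<close> unfolding e1 using dn fBs cB d0B d0 by (simp add: card_Diff_singleton)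
      have B''0: "B'' \<in> B0" unfolding B0_def using False c1 by auto
      have dD: "d \<notin> D"
      proof
        assume dD: "d \<in> D"
        have "B'' \<inter> D = insert d (B \<inter> D)" unfolding B''_def using dD d0D C D_def by auto
        moreover have "d \<notin> B \<inter> D" using dn dD d0D D_def by auto
        ultimately have "card (B'' \<inter> D) = Suc a" using cBD fBs by auto
        then show False using amax[OF B''0] by auto
      qed
      have e2: "B'' \<inter> D = B \<inter> D" unfolding B''_def using dD d0D C D_def by auto
      have B''BB: "B'' \<in> BB" unfolding BB_def using B''0 e2 cBD by auto
      have le: "\<Phi> B \<le> \<Phi> B''" using Bmin B''BB by auto
      have e3: "B'' \<inter> S' - D = insert d ((B \<inter> S' - D) - {d0})" using e1 dD by auto
      have dn2: "d \<notin> (B \<inter> S' - D) - {d0}" using dn by auto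
      have sB'': "(\<Sum>e\<in>B'' \<inter> S' - D. rx e) = rx d + ((\<Sum>e\<in>B \<inter> S' - D. rx e) - rx d0)"
        unfolding e3 using fBs d0B d0 d0D dn2 by (simp add: sum_diff1)
      have "real_of_ereal (P B) + rx d \<le> real_of_ereal (P B'') + rx d0"
        using le sB'' unfolding \<Phi>_def by simp
      have xd: "x d \<noteq> \<infinity>" using dD dS unfolding D_def by auto
      then have "P B + x d \<le> P B'' + x d0"
        using e4_le[of "P B" "x d" "P B''" "x d0"] \<open>real_of_ereal (P B) + rx d \<le> real_of_ereal (P B'') + rx d0\<close>
          False PB vm_ninf[OF vm] trop_ninf[OF x] d0 unfolding rx_def
        by auto
      then show ?thesis unfolding B''_def by (simp add: add.commute)
    qed
  qed
qed


lemma sum_ninf: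
  fixes f :: "'a \<Rightarrow> ereal"
  shows "(\<forall>i\<in>A. f i \<noteq> -\<infinity>) \<Longrightarrow> sum f A \<noteq> -\<infinity>"
proof (induction A rule: infinite_finite_induct)
  case (insert x F)
  then show ?case by (cases "f x"; cases "sum f F") auto
qed auto

lemma sum_fin:
  fixes f :: "'a \<Rightarrow> ereal"
  shows "(\<forall>i\<in>A. f i \<noteq> -\<infinity> \<and> f i \<noteq> \<infinity>) \<Longrightarrow> sum f A \<noteq> \<infinity>"
proof (induction A rule: infinite_finite_induct)
  case (insert x F)
  then show ?case by (cases "f x"; cases "sum f F") auto
qed auto

locale arr =
  fixes val :: "'k::field \<Rightarrow> ereal" and n :: nat and M :: "nat \<Rightarrow> nat \<Rightarrow> 'k"
    and P Q :: "nat set \<Rightarrow> ereal" and r k :: nat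
  assumes val: "valuation val" and n1: "1 \<le> n" and wm: "weakly_monomial n M"
    and vmP: "valuated_matroid {1..n} r P" and vmQ: "valuated_matroid {1..n} k Q"
begin

definition NZ where "NZ = {i\<in>{1..n}. \<exists>j\<in>{1..n}. M i j \<noteq> 0}"
definition sg where "sg i = (THE j. j \<in> {1..n} \<and> M i j \<noteq> 0)"
definition W where "W i = (if i \<in> NZ then val (M i (sg i)) else \<infinity>)"

lemma val0: "val x = \<infinity> \<longleftrightarrow> x = 0"
  using val unfolding valuation_def by metis

lemma val_ninf: "val x \<noteq> -\<infinity>"
  using val unfolding valuation_def by (metis MInfty_neq_PInfty(1))

lemma NZsub: "NZ \<subseteq> {1..n}" unfolding NZ_def by auto

lemma sg_prop:
  assumes "i \<in> NZ"
  shows "sg i \<in> {1..n}" "M i (sg i) \<noteq> 0" "\<And>j. j \<in> {1..n} \<Longrightarrow> M i j \<noteq> 0 \<Longrightarrow> j = sg i"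
proof -
  obtain j where j: "j \<in> {1..n}" "M i j \<noteq> 0" using assms unfolding NZ_def by auto
  have i: "i \<in> {1..n}" using assms NZsub by auto
  have u: "\<And>j'. j' \<in> {1..n} \<and> M i j' \<noteq> 0 \<Longrightarrow> j' = j"
    using wm j i unfolding weakly_monomial_def by blast
  have "sg i = j" unfolding sg_def using j u by (intro the_equality) auto
  then show "sg i \<in> {1..n}" "M i (sg i) \<noteq> 0" "\<And>j. j \<in> {1..n} \<Longrightarrow> M i j \<noteq> 0 \<Longrightarrow> j = sg i"
    using j u by auto
qed

lemma W_ninf: "W i \<noteq> -\<infinity>"
  unfolding W_def using val_ninf by auto

lemma W_fin: "W i \<noteq> \<infinity> \<longleftrightarrow> i \<in> NZ"
  unfolding W_def using val0 sg_prop(2) by auto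

lemma valM:
  assumes "i \<in> {1..n}" "j \<in> {1..n}"
  shows "val (M i j) = (if i \<in> NZ \<and> j = sg i then W i else \<infinity>)"
proof (cases "M i j = 0")
  case True
  then show ?thesis using val0 sg_prop(2) by auto
next
  case False
  then have "i \<in> NZ" unfolding NZ_def using assms by auto
  then show ?thesis using sg_prop(3)[OF \<open>i \<in> NZ\<close> assms(2) False] unfolding W_def by auto
qed

lemma tmv:
  assumes "\<forall>e. x e \<noteq> -\<infinity>"
  shows "trop_mat_vec val n M x = (\<lambda>i. if i \<in> {1..n} then W i + x (sg i) else \<infinity>)"
proof
  fix i
  show "trop_mat_vec val n M x i = (if i \<in> {1..n} then W i + x (sg i) else \<infinity>)"
  proof (cases "i \<in> {1..n}")
    case False then show ?thesis unfolding trop_mat_vec_def by auto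
  next
    case True
    have "(INF j\<in>{1..n}. val (M i j) + x j) = W i + x (sg i)"
    proof (cases "i \<in> NZ")
      case True
      have s: "sg i \<in> {1..n}" using sg_prop(1)[OF True] by auto
      show ?thesis
      proof (rule antisym)
        have "(INF j\<in>{1..n}. val (M i j) + x j) \<le> val (M i (sg i)) + x (sg i)"
          using s by (rule INF_lower)
        then show "(INF j\<in>{1..n}. val (M i j) + x j) \<le> W i + x (sg i)"
          using valM[OF \<open>i \<in> {1..n}\<close> s] True by simp
        show "W i + x (sg i) \<le> (INF j\<in>{1..n}. val (M i j) + x j)"
        proof (rule INF_greatest)
          fix j assume "j \<in> {1..n}"
          then show "W i + x (sg i) \<le> val (M i j) + x j"
            using valM[OF \<open>i \<in> {1..n}\<close> \<open>j \<in> {1..n}\<close>] True by auto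
        qed
      qed
    next
      case False
      have "\<And>j. j \<in> {1..n} \<Longrightarrow> val (M i j) + x j = \<infinity>"
        using valM[OF \<open>i \<in> {1..n}\<close>] False by auto
      then have "(INF j\<in>{1..n}. val (M i j) + x j) = \<infinity>"
        by (intro INF_eq_const) (use n1 in auto)
      then show ?thesis using False unfolding W_def by auto
    qed
    then show ?thesis unfolding trop_mat_vec_def using True by auto
  qed
qed

lemma assoc: "assoc_map val n M i = (if i \<in> NZ then sg i else 0, W i)"
  unfolding assoc_map_def W_def NZ_def sg_def by (auto simp: Let_def)

definition h where "h I J a = W a + P (insert (sg a) I) + Q (J - {a})"

definition ARR where "ARR \<longleftrightarrow> (\<forall>I J. 1 \<le> r \<and> I \<subseteq> {1..n} \<and> card I = r - 1 \<and> J \<subseteq> {1..n} \<and> card J = k + 1 \<longrightarrow>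
   (\<forall>a\<in>J. h I J a \<noteq> \<infinity> \<longrightarrow> (\<exists>b\<in>J. b \<noteq> a \<and> h I J b \<le> h I J a)))"

definition ARRQ where "ARRQ \<longleftrightarrow> (\<forall>I J. 1 \<le> r \<and> I \<subseteq> {1..n} \<and> card I = r - 1 \<and> J \<subseteq> {1..n} \<and> card J = k + 1 \<longrightarrow>
   min_twice (({1..n} - I) \<times> J) (\<lambda>(j, i). val (M i j) + P (insert j I) + Q (J - {i})))"

lemma h_fin:
  assumes "h I J a \<noteq> \<infinity>" "1 \<le> r" "card I = r - 1" "finite I"
  shows "a \<in> NZ" "sg a \<in> {1..n}" "sg a \<notin> I" "P (insert (sg a) I) \<noteq> \<infinity>" "Q (J - {a}) \<noteq> \<infinity>"
proof -
  show a: "a \<in> NZ" using assms(1) W_fin unfolding h_def by auto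
  show "sg a \<in> {1..n}" using sg_prop(1)[OF a] by auto
  show p: "P (insert (sg a) I) \<noteq> \<infinity>" "Q (J - {a}) \<noteq> \<infinity>" using assms(1) unfolding h_def by auto
  show "sg a \<notin> I"
  proof
    assume "sg a \<in> I"
    then have "insert (sg a) I = I" by auto
    then show False using vm_fin(2)[OF vmP p(1)] assms by auto
  qed
qed

lemma arr_iff: "ARRQ \<longleftrightarrow> ARR"
proof -
  have key: "min_twice (({1..n} - I) \<times> J) (\<lambda>(j, i). val (M i j) + P (insert j I) + Q (J - {i})) \<longleftrightarrow>
     (\<forall>a\<in>J. h I J a \<noteq> \<infinity> \<longrightarrow> (\<exists>b\<in>J. b \<noteq> a \<and> h I J b \<le> h I J a))"
    if hyp: "1 \<le> r" "I \<subseteq> {1..n}" "card I = r - 1" "J \<subseteq> {1..n}" "card J = k + 1" for I J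
  proof -
    define g where "g = (\<lambda>(j, i). val (M i j) + P (insert j I) + Q (J - {i}))"
    have fI: "finite I" using hyp(2) by (meson finite_subset finite_atLeastAtMost)
    have fJ: "finite J" using hyp(4) by (meson finite_subset finite_atLeastAtMost)
    have fin: "finite (({1..n} - I) \<times> J)" using fJ by auto
    have g1: "\<And>a. a \<in> J \<Longrightarrow> h I J a \<noteq> \<infinity> \<Longrightarrow> (sg a, a) \<in> ({1..n} - I) \<times> J \<and> g (sg a, a) = h I J a"
    proof -
      fix a assume a: "a \<in> J" "h I J a \<noteq> \<infinity>"
      note hf = h_fin[OF a(2) hyp(1) hyp(3) fI]
      have "a \<in> {1..n}" using a hyp by auto
      then show "(sg a, a) \<in> ({1..n} - I) \<times> J \<and> g (sg a, a) = h I J a"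
        using hf a valM[of a "sg a"] unfolding g_def h_def by auto
    qed
    have g2: "\<And>j i. (j, i) \<in> ({1..n} - I) \<times> J \<Longrightarrow> g (j, i) \<noteq> \<infinity> \<Longrightarrow> i \<in> NZ \<and> j = sg i \<and> g (j, i) = h I J i"
    proof -
      fix j i assume p: "(j, i) \<in> ({1..n} - I) \<times> J" "g (j, i) \<noteq> \<infinity>"
      have ij: "i \<in> {1..n}" "j \<in> {1..n}" using p hyp by auto
      have "val (M i j) \<noteq> \<infinity>" using p(2) unfolding g_def by auto
      then have "i \<in> NZ \<and> j = sg i" using valM[OF ij] by metis
      then show "i \<in> NZ \<and> j = sg i \<and> g (j, i) = h I J i"
        using valM[OF ij] unfolding g_def h_def by auto
    qed
    show ?thesis
    proof
      assume mt: "min_twice (({1..n} - I) \<times> J) (\<lambda>(j, i). val (M i j) + P (insert j I) + Q (J - {i}))"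
      then have mt2: "\<forall>p\<in>({1..n} - I) \<times> J. g p \<noteq> \<infinity> \<longrightarrow> (\<exists>q\<in>({1..n} - I) \<times> J. q \<noteq> p \<and> g q \<le> g p)"
        using mt_iff[OF fin] unfolding g_def by blast
      show "\<forall>a\<in>J. h I J a \<noteq> \<infinity> \<longrightarrow> (\<exists>b\<in>J. b \<noteq> a \<and> h I J b \<le> h I J a)"
      proof (intro ballI impI)
        fix a assume a: "a \<in> J" "h I J a \<noteq> \<infinity>"
        note ga = g1[OF a]
        have "g (sg a, a) \<noteq> \<infinity>" using ga a(2) by simp
        then obtain q where q: "q \<in> ({1..n} - I) \<times> J" "q \<noteq> (sg a, a)" "g q \<le> g (sg a, a)"
          using mt2 ga by blast
        obtain j i where qe: "q = (j, i)" by (cases q)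
        have "g q \<noteq> \<infinity>" using q(3) ga a(2) by auto
        then have gi: "i \<in> NZ \<and> j = sg i \<and> g (j, i) = h I J i" using g2 q(1) qe by auto
        show "\<exists>b\<in>J. b \<noteq> a \<and> h I J b \<le> h I J a"
          using q qe gi ga by (intro bexI[of _ i]) auto
      qed
    next
      assume R: "\<forall>a\<in>J. h I J a \<noteq> \<infinity> \<longrightarrow> (\<exists>b\<in>J. b \<noteq> a \<and> h I J b \<le> h I J a)"
      have "\<forall>p\<in>({1..n} - I) \<times> J. g p \<noteq> \<infinity> \<longrightarrow> (\<exists>q\<in>({1..n} - I) \<times> J. q \<noteq> p \<and> g q \<le> g p)"
      proof (intro ballI impI)
        fix p assume p: "p \<in> ({1..n} - I) \<times> J" "g p \<noteq> \<infinity>"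
        obtain j i where pe: "p = (j, i)" by (cases p)
        have gi: "i \<in> NZ \<and> j = sg i \<and> g (j, i) = h I J i" using g2 p pe by auto
        have iJ: "i \<in> J" using p pe by auto
        have "h I J i \<noteq> \<infinity>" using gi p pe by metis
        then obtain b where b: "b \<in> J" "b \<noteq> i" "h I J b \<le> h I J i" using R iJ by blast
        have "h I J b \<noteq> \<infinity>" using b(3) gi p pe by auto
        note gb = g1[OF b(1) this]
        show "\<exists>q\<in>({1..n} - I) \<times> J. q \<noteq> p \<and> g q \<le> g p"
          using gb b gi pe by (intro bexI[of _ "(sg b, b)"]) auto
      qed
      then show "min_twice (({1..n} - I) \<times> J) (\<lambda>(j, i). val (M i j) + P (insert j I) + Q (J - {i}))"
        using mt_iff[OF fin] unfolding g_def by blast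
    qed
  qed
  show ?thesis unfolding ARRQ_def ARR_def
  proof (intro iffI allI impI)
    fix I J
    assume A: "\<forall>I J. 1 \<le> r \<and> I \<subseteq> {1..n} \<and> card I = r - 1 \<and> J \<subseteq> {1..n} \<and> card J = k + 1 \<longrightarrow>
      min_twice (({1..n} - I) \<times> J) (\<lambda>(j, i). val (M i j) + P (insert j I) + Q (J - {i}))"
      and H: "1 \<le> r \<and> I \<subseteq> {1..n} \<and> card I = r - 1 \<and> J \<subseteq> {1..n} \<and> card J = k + 1"
    have "min_twice (({1..n} - I) \<times> J) (\<lambda>(j, i). val (M i j) + P (insert j I) + Q (J - {i}))"
      using A H by blast
    then show "\<forall>a\<in>J. h I J a \<noteq> \<infinity> \<longrightarrow> (\<exists>b\<in>J. b \<noteq> a \<and> h I J b \<le> h I J a)"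
      using key H by blast
  next
    fix I J
    assume A: "\<forall>I J. 1 \<le> r \<and> I \<subseteq> {1..n} \<and> card I = r - 1 \<and> J \<subseteq> {1..n} \<and> card J = k + 1 \<longrightarrow>
      (\<forall>a\<in>J. h I J a \<noteq> \<infinity> \<longrightarrow> (\<exists>b\<in>J. b \<noteq> a \<and> h I J b \<le> h I J a))"
      and H: "1 \<le> r \<and> I \<subseteq> {1..n} \<and> card I = r - 1 \<and> J \<subseteq> {1..n} \<and> card J = k + 1"
    have "\<forall>a\<in>J. h I J a \<noteq> \<infinity> \<longrightarrow> (\<exists>b\<in>J. b \<noteq> a \<and> h I J b \<le> h I J a)"
      using A H by blast
    then show "min_twice (({1..n} - I) \<times> J) (\<lambda>(j, i). val (M i j) + P (insert j I) + Q (J - {i}))"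
      using key H by blast
  qed
qed

lemma finn: "A \<subseteq> {1..n} \<Longrightarrow> finite A"
  by (meson finite_subset finite_atLeastAtMost)

lemma notin_card:
  assumes "1 \<le> r" "card I = r - 1" "P (insert a I) \<noteq> \<infinity>"
  shows "a \<notin> I"
proof
  assume "a \<in> I"
  then have "insert a I = I" by auto
  then show False using vm_fin(2)[OF vmP assms(3)] assms(1,2) by auto
qed

definition tropb where "tropb \<longleftrightarrow> (\<forall>x\<in>trop_space {1..n} r P.
   (\<exists>i. trop_mat_vec val n M x i \<noteq> \<infinity>) \<longrightarrow> trop_mat_vec val n M x \<in> trop_space {1..n} k Q)"

lemma cocirc_in_trop:
  assumes "1 \<le> r" "I \<subseteq> {1..n}" "card I = r - 1" "\<exists>e\<in>{1..n}. P (insert e I) \<noteq> \<infinity>"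
  shows "(\<lambda>e. P (insert e I)) \<in> trop_space {1..n} r P"
  unfolding trop_space_def
proof (intro CollectI conjI allI impI)
  fix e show "P (insert e I) \<noteq> -\<infinity>" using vm_ninf[OF vmP] by auto
next
  fix e assume "e \<notin> {1..n}"
  then show "P (insert e I) = \<infinity>" using vm_fin(1)[OF vmP, of "insert e I"] by auto
next
  show "\<exists>e\<in>{1..n}. P (insert e I) \<noteq> \<infinity>" by fact
next
  fix K assume K: "K \<subseteq> {1..n} \<and> card K = Suc r \<and> (\<exists>e\<in>K. P (K - {e}) \<noteq> \<infinity>)"
  have fK: "finite K" using K finn by auto
  have K1: "K \<subseteq> {1..n}" "card K = r + 1" using K by auto
  note pl = pluecker[OF vmP assms(1-3) K1]
  show "min_twice K (\<lambda>e. P (K - {e}) + P (insert e I))"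
    unfolding mt_iff[OF fK]
  proof (intro ballI impI)
    fix a assume a: "a \<in> K" "P (K - {a}) + P (insert a I) \<noteq> \<infinity>"
    have "P (insert a I) \<noteq> \<infinity>" using a by auto
    then have "a \<notin> I" using notin_card[OF assms(1,3)] by blast
    then obtain b where "b \<in> K - I" "b \<noteq> a" "P (insert b I) + P (K - {b}) \<le> P (insert a I) + P (K - {a})"
      using pl a by (metis (no_types, lifting) DiffI add.commute)
    then show "\<exists>b\<in>K. b \<noteq> a \<and> P (K - {b}) + P (insert b I) \<le> P (K - {a}) + P (insert a I)"
      by (metis DiffD1 add.commute)
  qed
qed

lemma b_to_arr:
  assumes tb: tropb
  shows ARR
  unfolding ARR_def
proof (intro allI impI ballI)
  fix I J a
  assume H: "1 \<le> r \<and> I \<subseteq> {1..n} \<and> card I = r - 1 \<and> J \<subseteq> {1..n} \<and> card J = k + 1"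
    and a: "a \<in> J" "h I J a \<noteq> \<infinity>"
  have fI: "finite I" using H finn by auto
  note hf = h_fin[OF a(2) _ _ fI]
  define x where "x = (\<lambda>e. P (insert e I))"
  have ex: "\<exists>e\<in>{1..n}. P (insert e I) \<noteq> \<infinity>" using hf H by blast
  have xt: "x \<in> trop_space {1..n} r P" unfolding x_def
    using cocirc_in_trop[OF _ _ _ ex] H by blast
  have xn: "\<forall>e. x e \<noteq> -\<infinity>" using trop_ninf[OF xt] by auto
  define y where "y = trop_mat_vec val n M x"
  have y: "y = (\<lambda>i. if i \<in> {1..n} then W i + x (sg i) else \<infinity>)" unfolding y_def using tmv[OF xn] .
  have aN: "a \<in> {1..n}" using a H by auto
  have ya: "y a = W a + P (insert (sg a) I)" using aN unfolding y x_def by simp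
  have yJ: "\<And>b. b \<in> J \<Longrightarrow> h I J b = Q (J - {b}) + y b"
    using H unfolding y x_def h_def by (auto simp: ac_simps)
  have "y a \<noteq> \<infinity>" using a(2) ya unfolding h_def by auto
  then have yt: "y \<in> trop_space {1..n} k Q" using tb xt unfolding tropb_def y_def by blast
  have fJ: "finite J" using H finn by auto
  have "min_twice J (\<lambda>e. Q (J - {e}) + y e)"
    using trop_mt[OF yt, of J] H hf a by auto
  then have "\<forall>a\<in>J. Q (J - {a}) + y a \<noteq> \<infinity> \<longrightarrow> (\<exists>b\<in>J. b \<noteq> a \<and> Q (J - {b}) + y b \<le> Q (J - {a}) + y a)"
    using mt_iff[OF fJ] by simp
  then show "\<exists>b\<in>J. b \<noteq> a \<and> h I J b \<le> h I J a"
    using a yJ by auto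
qed

lemma basisP: "\<exists>B. P B \<noteq> \<infinity>"
  using vmP unfolding valuated_matroid_def by blast

lemma arr_to_b:
  assumes A: ARR
  shows tropb
  unfolding tropb_def
proof (intro ballI impI)
  fix x assume xt: "x \<in> trop_space {1..n} r P" and ex: "\<exists>i. trop_mat_vec val n M x i \<noteq> \<infinity>"
  have xn: "\<forall>e. x e \<noteq> -\<infinity>" using trop_ninf[OF xt] by auto
  define y where "y = trop_mat_vec val n M x"
  have y: "y = (\<lambda>i. if i \<in> {1..n} then W i + x (sg i) else \<infinity>)" unfolding y_def using tmv[OF xn] .
  have rr1: "\<exists>B. P B \<noteq> \<infinity> \<and> card (B \<inter> {1..n}) = r"
    using basisP vm_fin[OF vmP] by (metis inf.absorb1)
  have rr2: "\<forall>B. P B \<noteq> \<infinity> \<longrightarrow> card (B \<inter> {1..n}) \<le> r"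
    using vm_fin[OF vmP] by (metis inf.absorb1 order_refl)
  show "trop_mat_vec val n M x \<in> trop_space {1..n} k Q"
    unfolding y_def[symmetric] trop_space_def
  proof (intro CollectI conjI allI impI)
    fix e show "y e \<noteq> -\<infinity>" unfolding y using xn W_ninf by auto
  next
    fix e assume "e \<notin> {1..n}" then show "y e = \<infinity>" unfolding y by auto
  next
    obtain i where "y i \<noteq> \<infinity>" using ex unfolding y_def by auto
    then show "\<exists>e\<in>{1..n}. y e \<noteq> \<infinity>" unfolding y by (auto split: if_splits)
  next
    fix K assume K: "K \<subseteq> {1..n} \<and> card K = Suc k \<and> (\<exists>e\<in>K. Q (K - {e}) \<noteq> \<infinity>)"
    have fK: "finite K" using K finn by auto
    show "min_twice K (\<lambda>e. Q (K - {e}) + y e)"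
      unfolding mt_iff[OF fK]
    proof (intro ballI impI)
      fix i0 assume i0: "i0 \<in> K" "Q (K - {i0}) + y i0 \<noteq> \<infinity>"
      have i0n: "i0 \<in> {1..n}" using i0 K by auto
      have yi0: "y i0 = W i0 + x (sg i0)" using i0n unfolding y by simp
      have fi0: "W i0 \<noteq> \<infinity>" "x (sg i0) \<noteq> \<infinity>" "Q (K - {i0}) \<noteq> \<infinity>" using i0(2) yi0 by auto
      have i0N: "i0 \<in> NZ" using fi0 W_fin by auto
      define d0 where "d0 = sg i0"
      have d0n: "d0 \<in> {1..n}" unfolding d0_def using sg_prop(1)[OF i0N] .
      obtain B where B: "P B \<noteq> \<infinity>" "d0 \<in> B" "card (B \<inter> {1..n}) = r"
        and Bp: "\<forall>d\<in>{1..n}. \<forall>C. C \<subseteq> {1..n} - {1..n} \<longrightarrow> d \<notin> B \<inter> {1..n} - {d0} \<longrightarrow>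
          x d + P B \<le> x d0 + P (insert d (B \<inter> {1..n} - {d0}) \<union> C)"
        using cocirc[OF vmP xt order_refl rr1 rr2 d0n] fi0(2) unfolding d0_def by blast
      have Bs: "B \<subseteq> {1..n}" "card B = r" using vm_fin[OF vmP B(1)] by auto
      have BI: "B \<inter> {1..n} = B" using Bs by auto
      define I where "I = B - {d0}"
      have fB: "finite B" using Bs finn by auto
      have r1: "1 \<le> r" using Bs B(2) fB by (metis One_nat_def Suc_leI card_gt_0_iff empty_iff)
      have I: "I \<subseteq> {1..n}" "card I = r - 1" unfolding I_def using Bs B(2) fB by auto
      have BdI: "insert d0 I = B" unfolding I_def using B(2) by auto
      have Bp2: "\<And>d. d \<in> {1..n} \<Longrightarrow> d \<notin> I \<Longrightarrow> x d + P B \<le> x d0 + P (insert d I)"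
        using Bp BI unfolding I_def by (metis Diff_cancel Un_empty_right empty_subsetI)
      have AR: "\<forall>a\<in>K. h I K a \<noteq> \<infinity> \<longrightarrow> (\<exists>b\<in>K. b \<noteq> a \<and> h I K b \<le> h I K a)"
        using A r1 I K unfolding ARR_def by simp
      have hi0: "h I K i0 = W i0 + P B + Q (K - {i0})" unfolding h_def d0_def[symmetric] BdI ..
      have "h I K i0 \<noteq> \<infinity>" unfolding hi0 using fi0 B(1) by auto
      then obtain b where b: "b \<in> K" "b \<noteq> i0" "h I K b \<le> h I K i0" using AR i0(1) by blast
      have hbf: "h I K b \<noteq> \<infinity>" using b(3) \<open>h I K i0 \<noteq> \<infinity>\<close> by auto
      have fI: "finite I" using I finn by auto
      note hf = h_fin[OF hbf r1 I(2) fI]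
      have bn: "b \<in> {1..n}" using b K by auto
      have yb: "y b = W b + x (sg b)" using bn unfolding y by simp
      have ineq: "x (sg b) + P B \<le> x d0 + P (insert (sg b) I)" using Bp2 hf by auto
      have "(Q (K - {b}) + y b) + P B = (Q (K - {b}) + W b) + (x (sg b) + P B)"
        unfolding yb by (simp add: ac_simps)
      also have "\<dots> \<le> (Q (K - {b}) + W b) + (x d0 + P (insert (sg b) I))"
        using ineq by (rule add_left_mono)
      also have "\<dots> = h I K b + x d0" unfolding h_def by (simp add: ac_simps)
      also have "\<dots> \<le> h I K i0 + x d0" using b(3) by (rule add_right_mono)
      also have "\<dots> = (Q (K - {i0}) + y i0) + P B" unfolding hi0 yi0 d0_def by (simp add: ac_simps)
      finally have le: "(Q (K - {b}) + y b) + P B \<le> (Q (K - {i0}) + y i0) + P B" .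
      have "P B \<noteq> -\<infinity>" using vm_ninf[OF vmP] by auto
      then have "Q (K - {b}) + y b \<le> Q (K - {i0}) + y i0"
        using le B(1) ereal_add_le_add_iff2 by auto
      then show "\<exists>b'\<in>K. b' \<noteq> i0 \<and> Q (K - {b'}) + y b' \<le> Q (K - {i0}) + y i0"
        using b by blast
    qed
  qed
qed

definition "S' = sg ` NZ"
definition "T = {1..n} - S'"
definition "rr = affine_rank val n M P"
definition "G = affine_induced val n M P"
definition "R X = (INF C\<in>Pow T. P (X \<union> C))"
definition "fs i = (if i \<in> NZ then sg i else 0)"

lemma S'sub: "S' \<subseteq> {1..n}" unfolding S'_def using sg_prop(1) by auto

lemma fst_assoc: "fst (assoc_map val n M i) = fs i" unfolding assoc fs_def by simp
lemma snd_assoc: "snd (assoc_map val n M i) = W i" unfolding assoc by simp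

lemma img_fs: "fst ` assoc_map val n M ` B = fs ` B"
  using fst_assoc by (simp add: image_image)

lemma fsS: "fs ` {0..n} = insert 0 S'"
  proof
    show "fs ` {0..n} \<subseteq> insert 0 S'" unfolding fs_def S'_def by auto
    have "fs 0 = 0" unfolding fs_def using NZsub by auto
    then have "0 \<in> fs ` {0..n}" by (metis atLeastAtMost_iff image_eqI le0)
    moreover have "S' \<subseteq> fs ` {0..n}"
    proof
      fix d assume "d \<in> S'"
      then obtain i where i: "i \<in> NZ" "d = sg i" unfolding S'_def by auto
      then have "fs i = d" "i \<in> {0..n}" unfolding fs_def using NZsub by auto
      then show "d \<in> fs ` {0..n}" by (metis image_eqI)
    qed
    ultimately show "insert 0 S' \<subseteq> fs ` {0..n}" by auto
  qed

lemma S_eq: "fst ` assoc_map val n M ` {0..n} = insert 0 S'"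
  using fsS img_fs by simp

lemma pointed_simp: "pointed P B \<noteq> \<infinity> \<longleftrightarrow> 0 \<notin> B \<and> P B \<noteq> \<infinity>"
  unfolding pointed_def by auto

lemma rr_set: "{card (B \<inter> insert 0 S') |B. B \<subseteq> {0..n} \<and> pointed P B \<noteq> \<infinity>} = {card (B \<inter> S') |B. P B \<noteq> \<infinity>}"
proof -
  have a: "\<And>B. pointed P B \<noteq> \<infinity> \<Longrightarrow> B \<inter> insert 0 S' = B \<inter> S'" using pointed_simp by auto
  have b: "\<And>B. P B \<noteq> \<infinity> \<Longrightarrow> B \<subseteq> {0..n} \<and> pointed P B \<noteq> \<infinity>"
  proof -
    fix B assume "P B \<noteq> \<infinity>"
    then have "B \<subseteq> {1..n}" using vm_fin(1)[OF vmP] by blast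
    then have "0 \<notin> B" "B \<subseteq> {0..n}" by auto
    then show "B \<subseteq> {0..n} \<and> pointed P B \<noteq> \<infinity>" using \<open>P B \<noteq> \<infinity>\<close> unfolding pointed_def by simp
  qed
  show ?thesis
  proof
    show "{card (B \<inter> insert 0 S') |B. B \<subseteq> {0..n} \<and> pointed P B \<noteq> \<infinity>} \<subseteq> {card (B \<inter> S') |B. P B \<noteq> \<infinity>}"
    proof
      fix c assume "c \<in> {card (B \<inter> insert 0 S') |B. B \<subseteq> {0..n} \<and> pointed P B \<noteq> \<infinity>}"
      then obtain B where B: "B \<subseteq> {0..n}" "pointed P B \<noteq> \<infinity>" "c = card (B \<inter> insert 0 S')" by blast
      then have "c = card (B \<inter> S')" "P B \<noteq> \<infinity>" using a pointed_simp by auto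
      then show "c \<in> {card (B \<inter> S') |B. P B \<noteq> \<infinity>}" by blast
    qed
    show "{card (B \<inter> S') |B. P B \<noteq> \<infinity>} \<subseteq> {card (B \<inter> insert 0 S') |B. B \<subseteq> {0..n} \<and> pointed P B \<noteq> \<infinity>}"
    proof
      fix c assume "c \<in> {card (B \<inter> S') |B. P B \<noteq> \<infinity>}"
      then obtain B where B: "P B \<noteq> \<infinity>" "c = card (B \<inter> S')" by blast
      then have "B \<subseteq> {0..n}" "pointed P B \<noteq> \<infinity>" "c = card (B \<inter> insert 0 S')" using a b by auto
      then show "c \<in> {card (B \<inter> insert 0 S') |B. B \<subseteq> {0..n} \<and> pointed P B \<noteq> \<infinity>}" by blast
    qed
  qed
qed

lemma rr_eq: "rr = Max {card (B \<inter> S') |B. P B \<noteq> \<infinity>}"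
  unfolding rr_def affine_rank_def restr_rank_def S_eq rr_set ..

lemma rr_props: "\<exists>B. P B \<noteq> \<infinity> \<and> card (B \<inter> S') = rr" "\<forall>B. P B \<noteq> \<infinity> \<longrightarrow> card (B \<inter> S') \<le> rr"
proof -
  define X where "X = {card (B \<inter> S') |B. P B \<noteq> \<infinity>}"
  have "X \<subseteq> {..n}"
  proof
    fix c assume "c \<in> X"
    then obtain B where B: "P B \<noteq> \<infinity>" "c = card (B \<inter> S')" unfolding X_def by auto
    have "B \<inter> S' \<subseteq> {1..n}" using S'sub by auto
    then have "card (B \<inter> S') \<le> card {1..n}" by (intro card_mono) auto
    then show "c \<in> {..n}" using B by auto
  qed
  then have fX: "finite X" by (rule finite_subset) auto
  have neX: "X \<noteq> {}" unfolding X_def using basisP by auto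
  have "rr \<in> X" unfolding rr_eq X_def[symmetric] using fX neX by (rule Max_in)
  then show "\<exists>B. P B \<noteq> \<infinity> \<and> card (B \<inter> S') = rr" unfolding X_def by auto
  show "\<forall>B. P B \<noteq> \<infinity> \<longrightarrow> card (B \<inter> S') \<le> rr"
  proof (intro allI impI)
    fix B assume "P B \<noteq> \<infinity>"
    then have "card (B \<inter> S') \<in> X" unfolding X_def by blast
    then show "card (B \<inter> S') \<le> rr" unfolding rr_eq X_def[symmetric] using fX by (rule Max_ge[rotated])
  qed
qed

lemma rr_le_r: "rr \<le> r"
proof -
  obtain B where B: "P B \<noteq> \<infinity>" "card (B \<inter> S') = rr" using rr_props by blast
  have "card (B \<inter> S') \<le> card B" using vm_fin(1)[OF vmP B(1)] finn by (intro card_mono) auto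
  then show ?thesis using B vm_fin(2)[OF vmP B(1)] by auto
qed

lemma R_le: "C \<subseteq> T \<Longrightarrow> R X \<le> P (X \<union> C)"
  unfolding R_def by (rule INF_lower) auto

lemma R_att: "\<exists>C. C \<subseteq> T \<and> R X = P (X \<union> C)"
proof -
  have "finite (Pow T)" unfolding T_def by auto
  then obtain C where "C \<in> Pow T" "R X = P (X \<union> C)" unfolding R_def using inf_attained[of "Pow T"] by blast
  then show ?thesis by auto
qed

lemma R_ninf: "R X \<noteq> -\<infinity>"
  using R_att vm_ninf[OF vmP] by metis

lemma W_sum_fin: "B \<subseteq> NZ \<Longrightarrow> (\<Sum>i\<in>B. W i) \<noteq> \<infinity> \<and> (\<Sum>i\<in>B. W i) \<noteq> -\<infinity>"
  using sum_fin[of B W] sum_ninf[of B W] W_fin W_ninf by auto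

lemma G_unf: "G B = (if B \<subseteq> {0..n} \<and> card B = rr \<and> card (fs ` B) = rr
      then restrict_vm {0..n} (pointed P) (insert 0 S') (fs ` B) + (\<Sum>i\<in>B. W i) else \<infinity>)"
  unfolding G_def affine_induced_def Let_def img_fs fsS rr_def[symmetric] snd_assoc ..

lemma Gfin:
  assumes "G B \<noteq> \<infinity>"
  shows "B \<subseteq> NZ" "inj_on sg B" "card B = rr"
proof -
  have c: "B \<subseteq> {0..n}" "card B = rr" "card (fs ` B) = rr"
    and s: "(\<Sum>i\<in>B. W i) \<noteq> \<infinity>"
    using assms unfolding G_unf by (auto split: if_splits)
  have fB: "finite B" using c(1) by (rule finite_subset) auto
  then have "\<forall>i\<in>B. W i \<noteq> \<infinity>" using s sum_Pinfty[of W B] by auto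
  then show BN: "B \<subseteq> NZ" using W_fin by auto
  have "fs ` B = sg ` B" unfolding fs_def using BN by auto
  then show "inj_on sg B" using c fB eq_card_imp_inj_on by metis
  show "card B = rr" by fact
qed

lemma Gval:
  assumes "B \<subseteq> NZ" "inj_on sg B" "card B = rr"
  shows "G B = R (sg ` B) + (\<Sum>i\<in>B. W i)"
proof -
  have fsB: "fs ` B = sg ` B" unfolding fs_def using assms(1) by auto
  have c: "card (sg ` B) = rr" using card_image[OF assms(2)] assms(3) by simp
  have B0: "B \<subseteq> {0..n}" using assms(1) NZsub by auto
  have sub: "sg ` B \<subseteq> insert 0 S'" unfolding S'_def using assms(1) by auto
  have rrr: "restr_rank {0..n} (pointed P) (insert 0 S') = rr"
    unfolding rr_def affine_rank_def S_eq ..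
  have D: "{0..n} - insert 0 S' = T" unfolding T_def by auto
  have pt: "\<And>C. C \<in> Pow T \<Longrightarrow> pointed P (sg ` B \<union> C) = P (sg ` B \<union> C)"
    unfolding pointed_def T_def S'_def using assms(1) sg_prop(1) by fastforce
  have "restrict_vm {0..n} (pointed P) (insert 0 S') (sg ` B) = R (sg ` B)"
    unfolding restrict_vm_def rrr D R_def using sub c pt by (auto intro: INF_cong)
  then show ?thesis unfolding G_unf using fsB c B0 assms(3) by simp
qed

lemma G_ninf: "G B \<noteq> -\<infinity>"
proof (cases "G B = \<infinity>")
  case False
  note g = Gfin[OF False]
  show ?thesis unfolding Gval[OF g] using R_ninf W_sum_fin[OF g(1)] by (cases "R (sg ` B)") auto
qed auto

lemma Qo: "0 \<notin> J \<Longrightarrow> pointed Q J = Q J" unfolding pointed_def by auto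

definition QUOT where "QUOT \<longleftrightarrow> affine_morphism val n M k Q P"

lemma quot_unf: "QUOT \<longleftrightarrow> rr \<le> k \<and> (\<forall>I J i. I \<subseteq> {0..n} \<and> card I = rr \<and> J \<subseteq> {0..n} \<and> card J = k \<and> i \<in> I - J \<longrightarrow>
   (\<exists>j\<in>J - I. G I + pointed Q J \<ge> G (insert j (I - {i})) + pointed Q (insert i (J - {j}))))"
  unfolding QUOT_def affine_morphism_def vm_quotient_def rr_def G_def ..

lemma c_to_b:
  assumes QU: QUOT
  shows tropb
  unfolding tropb_def
proof (intro ballI impI)
  fix x assume xt: "x \<in> trop_space {1..n} r P" and ex: "\<exists>i. trop_mat_vec val n M x i \<noteq> \<infinity>"
  have xn: "\<forall>e. x e \<noteq> -\<infinity>" using trop_ninf[OF xt] by auto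
  define y where "y = trop_mat_vec val n M x"
  have y: "y = (\<lambda>i. if i \<in> {1..n} then W i + x (sg i) else \<infinity>)" unfolding y_def using tmv[OF xn] .
  have EX: "\<forall>I J i. I \<subseteq> {0..n} \<and> card I = rr \<and> J \<subseteq> {0..n} \<and> card J = k \<and> i \<in> I - J \<longrightarrow>
   (\<exists>j\<in>J - I. G I + pointed Q J \<ge> G (insert j (I - {i})) + pointed Q (insert i (J - {j})))"
    using QU quot_unf by blast
  show "trop_mat_vec val n M x \<in> trop_space {1..n} k Q"
    unfolding y_def[symmetric] trop_space_def
  proof (intro CollectI conjI allI impI)
    fix e show "y e \<noteq> -\<infinity>" unfolding y using xn W_ninf by auto
  next
    fix e assume "e \<notin> {1..n}" then show "y e = \<infinity>" unfolding y by auto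
  next
    obtain i where "y i \<noteq> \<infinity>" using ex unfolding y_def by auto
    then show "\<exists>e\<in>{1..n}. y e \<noteq> \<infinity>" unfolding y by (auto split: if_splits)
  next
    fix K assume K: "K \<subseteq> {1..n} \<and> card K = Suc k \<and> (\<exists>e\<in>K. Q (K - {e}) \<noteq> \<infinity>)"
    have fK: "finite K" using K finn by auto
    show "min_twice K (\<lambda>e. Q (K - {e}) + y e)"
      unfolding mt_iff[OF fK]
    proof (intro ballI impI)
      fix i0 assume i0: "i0 \<in> K" "Q (K - {i0}) + y i0 \<noteq> \<infinity>"
      have i0n: "i0 \<in> {1..n}" using i0 K by auto
      have yi0: "y i0 = W i0 + x (sg i0)" using i0n unfolding y by simp
      have fi0: "W i0 \<noteq> \<infinity>" "x (sg i0) \<noteq> \<infinity>" "Q (K - {i0}) \<noteq> \<infinity>" using i0(2) yi0 by auto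
      have i0N: "i0 \<in> NZ" using fi0 W_fin by auto
      define d0 where "d0 = sg i0"
      have d0S: "d0 \<in> S'" unfolding d0_def S'_def using i0N by auto
      obtain B where B: "P B \<noteq> \<infinity>" "d0 \<in> B" "card (B \<inter> S') = rr"
        and Bp: "\<forall>d\<in>S'. \<forall>C. C \<subseteq> {1..n} - S' \<longrightarrow> d \<notin> B \<inter> S' - {d0} \<longrightarrow>
          x d + P B \<le> x d0 + P (insert d (B \<inter> S' - {d0}) \<union> C)"
        using cocirc[OF vmP xt S'sub rr_props d0S] fi0(2) unfolding d0_def by blast
      have Bs: "B \<subseteq> {1..n}" using vm_fin[OF vmP B(1)] by auto
      have fB: "finite B" using Bs finn by auto
      define D where "D = B \<inter> S' - {d0}"
      have fD: "finite D" unfolding D_def using fB by auto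
      have cD: "card D = rr - 1" unfolding D_def using B fB d0S by auto
      have "B \<inter> S' \<noteq> {}" using B(2) d0S by auto
      then have "card (B \<inter> S') > 0" using fB by (simp add: card_gt_0_iff)
      then have rr1: "1 \<le> rr" using B(3) by simp
      define iv where "iv = inv_into NZ sg"
      define I2 where "I2 = iv ` D"
      have DS: "D \<subseteq> S'" unfolding D_def by auto
      have sgiv: "\<And>d. d \<in> S' \<Longrightarrow> sg (iv d) = d \<and> iv d \<in> NZ"
        unfolding iv_def S'_def by (auto intro: f_inv_into_f inv_into_into)
      have I2N: "I2 \<subseteq> NZ" unfolding I2_def using sgiv DS by auto
      have sgI2: "sg ` I2 = D" unfolding I2_def using sgiv DS by (force simp: image_image)
      have injI2: "inj_on sg I2"
        unfolding I2_def inj_on_def using sgiv DS by (metis image_iff subsetD)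
      have cI2: "card I2 = rr - 1" using card_image[OF injI2] sgI2 cD by simp
      have fI2: "finite I2" unfolding I2_def using fD by auto
      have d0D: "d0 \<notin> D" unfolding D_def by auto
      have i0I2: "i0 \<notin> I2" using sgI2 d0D unfolding d0_def by auto
      define I where "I = insert i0 I2"
      have IN: "I \<subseteq> NZ" unfolding I_def using I2N i0N by auto
      have sgI: "sg ` I = insert d0 D" unfolding I_def d0_def using sgI2 by auto
      have injI: "inj_on sg I" unfolding I_def using injI2 sgI2 d0D unfolding d0_def by auto
      have cI: "card I = rr" unfolding I_def using cI2 i0I2 fI2 rr1 by auto
      have sI: "(\<Sum>i\<in>I. W i) = W i0 + (\<Sum>i\<in>I2. W i)" unfolding I_def using fI2 i0I2 by simp
      have GI: "G I = R (insert d0 D) + W i0 + (\<Sum>i\<in>I2. W i)"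
        using Gval[OF IN injI cI] unfolding sgI sI by (simp add: ac_simps)
      have BT: "B \<inter> T \<subseteq> T" by auto
      have Beq: "insert d0 D \<union> (B \<inter> T) = B" unfolding D_def T_def using B(2) d0S Bs by auto
      have RP: "R (insert d0 D) \<le> P B" using R_le[OF BT, of "insert d0 D"] Beq by simp
      define J2 where "J2 = K - {i0}"
      have J2s: "J2 \<subseteq> {0..n}" "card J2 = k" unfolding J2_def using K i0 fK by auto
      have Is: "I \<subseteq> {0..n}" using IN NZsub by auto
      have iIJ: "i0 \<in> I - J2" unfolding I_def J2_def by auto
      obtain j where j: "j \<in> J2 - I" and jle: "G I + pointed Q J2 \<ge> G (insert j (I - {i0})) + pointed Q (insert i0 (J2 - {j}))"
        using EX Is cI J2s iIJ by blast
      have jK: "j \<in> K" "j \<noteq> i0" "j \<notin> I2" using j unfolding J2_def I_def by auto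
      have e1: "I - {i0} = I2" unfolding I_def using i0I2 by auto
      have e2: "insert i0 (J2 - {j}) = K - {j}" unfolding J2_def using i0 jK by auto
      have z: "0 \<notin> K" using K by auto
      have Qe: "pointed Q J2 = Q (K - {i0})" "pointed Q (K - {j}) = Q (K - {j})"
        unfolding J2_def using Qo z by auto
      have le1: "G (insert j I2) + Q (K - {j}) \<le> G I + Q (K - {i0})"
        using jle unfolding e1 e2 Qe .
      define \<sigma> where "\<sigma> = (\<Sum>i\<in>I2. W i)"
      have \<sigma>f: "\<sigma> \<noteq> \<infinity>" "\<sigma> \<noteq> -\<infinity>" unfolding \<sigma>_def using W_sum_fin[OF I2N] by auto
      have PBn: "P B \<noteq> -\<infinity>" using vm_ninf[OF vmP] by auto
      have "G I + Q (K - {i0}) \<le> P B + W i0 + \<sigma> + Q (K - {i0})"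
        unfolding GI \<sigma>_def using RP by (intro add_right_mono) auto
      moreover have "P B + W i0 + \<sigma> + Q (K - {i0}) \<noteq> \<infinity>" using B(1) fi0 \<sigma>f by auto
      ultimately have fin1: "G (insert j I2) + Q (K - {j}) \<noteq> \<infinity>" using le1 by auto
      then have Gj: "G (insert j I2) \<noteq> \<infinity>" "Q (K - {j}) \<noteq> \<infinity>" by auto
      note gj = Gfin[OF Gj(1)]
      have jN: "j \<in> NZ" using gj(1) by auto
      have sgjD: "sg j \<notin> D"
      proof
        assume "sg j \<in> D"
        then have "sg j \<in> sg ` I2" using sgI2 by auto
        then show False using gj(2) jK(3) by (auto simp: inj_on_def)
      qed
      have sj: "(\<Sum>i\<in>insert j I2. W i) = W j + \<sigma>" unfolding \<sigma>_def using fI2 jK(3) by simp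
      have sgj: "sg ` insert j I2 = insert (sg j) D" using sgI2 by auto
      have Gjv: "G (insert j I2) = R (insert (sg j) D) + W j + \<sigma>"
        using Gval[OF gj] unfolding sj sgj by (simp add: ac_simps)
      have sjS: "sg j \<in> S'" unfolding S'_def using jN by auto
      obtain C where C: "C \<subseteq> T" "R (insert (sg j) D) = P (insert (sg j) D \<union> C)" using R_att by blast
      have ineq: "x (sg j) + P B \<le> x d0 + R (insert (sg j) D)"
        using Bp sjS C sgjD unfolding D_def T_def by auto
      have jn: "j \<in> {1..n}" using jN NZsub by auto
      have yj: "y j = W j + x (sg j)" using jn unfolding y by simp
      have "(Q (K - {j}) + y j) + (P B + \<sigma>) = (Q (K - {j}) + W j + \<sigma>) + (x (sg j) + P B)"
        unfolding yj by (simp add: ac_simps)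
      also have "\<dots> \<le> (Q (K - {j}) + W j + \<sigma>) + (x d0 + R (insert (sg j) D))"
        using ineq by (rule add_left_mono)
      also have "\<dots> = (G (insert j I2) + Q (K - {j})) + x d0" unfolding Gjv by (simp add: ac_simps)
      also have "\<dots> \<le> (G I + Q (K - {i0})) + x d0" using le1 by (rule add_right_mono)
      also have "\<dots> \<le> (P B + W i0 + \<sigma> + Q (K - {i0})) + x d0"
        using \<open>G I + Q (K - {i0}) \<le> P B + W i0 + \<sigma> + Q (K - {i0})\<close> by (rule add_right_mono)
      also have "\<dots> = (Q (K - {i0}) + y i0) + (P B + \<sigma>)" unfolding yi0 d0_def by (simp add: ac_simps)
      finally have le: "(Q (K - {j}) + y j) + (P B + \<sigma>) \<le> (Q (K - {i0}) + y i0) + (P B + \<sigma>)" .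
      have "P B + \<sigma> \<noteq> \<infinity>" "P B + \<sigma> \<noteq> -\<infinity>" using B(1) PBn \<sigma>f by auto
      then have "Q (K - {j}) + y j \<le> Q (K - {i0}) + y i0"
        using le ereal_add_le_add_iff2 by auto
      then show "\<exists>b'\<in>K. b' \<noteq> i0 \<and> Q (K - {b'}) + y b' \<le> Q (K - {i0}) + y i0"
        using jK by blast
    qed
  qed
qed

lemma basisQ: "\<exists>B. Q B \<noteq> \<infinity>"
  using vmQ unfolding valuated_matroid_def by blast

lemma arr_rr:
  assumes A: ARR
  shows "rr \<le> k"
proof (rule ccontr)
  assume "\<not> rr \<le> k"
  then have kr: "k < rr" by simp
  obtain J0 where J0: "Q J0 \<noteq> \<infinity>" using basisQ by blast
  have J0s: "J0 \<subseteq> {1..n}" "card J0 = k" using vm_fin[OF vmQ J0] by auto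
  have fJ0: "finite J0" using J0s finn by auto
  define X where "X = sg ` (J0 \<inter> NZ)"
  have XS: "X \<subseteq> S'" unfolding X_def S'_def by auto
  have cX: "card X \<le> k"
  proof -
    have "card X \<le> card (J0 \<inter> NZ)" unfolding X_def by (rule card_image_le) (use fJ0 in auto)
    also have "\<dots> \<le> card J0" using fJ0 by (intro card_mono) auto
    finally show ?thesis using J0s by simp
  qed
  define B0 where "B0 = {B. P B \<noteq> \<infinity> \<and> card (B \<inter> S') = rr}"
  have B0sub: "B0 \<subseteq> Pow {1..n}" unfolding B0_def using vm_fin(1)[OF vmP] by blast
  have fB0: "finite B0" by (rule finite_subset[OF B0sub]) simp
  have neB0: "B0 \<noteq> {}" using rr_props(1) unfolding B0_def by blast
  define a where "a = Max ((\<lambda>B. card (B \<inter> X)) ` B0)"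
  have amax: "\<And>B. B \<in> B0 \<Longrightarrow> card (B \<inter> X) \<le> a" unfolding a_def using fB0 by auto
  have "a \<in> (\<lambda>B. card (B \<inter> X)) ` B0" unfolding a_def using fB0 neB0 by (intro Max_in) auto
  then obtain B where BB0: "B \<in> B0" and cBX: "card (B \<inter> X) = a" by auto
  have PB: "P B \<noteq> \<infinity>" and cB: "card (B \<inter> S') = rr" using BB0 unfolding B0_def by auto
  have Bs: "B \<subseteq> {1..n}" "card B = r" using vm_fin[OF vmP PB] by auto
  have fB: "finite B" using Bs finn by auto
  have fX: "finite X" unfolding X_def using fJ0 by auto
  have "\<not> (B \<inter> S' \<subseteq> X)"
  proof
    assume "B \<inter> S' \<subseteq> X"
    then have "card (B \<inter> S') \<le> card X" using fX by (rule card_mono[rotated])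
    then show False using cB cX kr by simp
  qed
  then obtain d where d: "d \<in> B" "d \<in> S'" "d \<notin> X" by auto
  obtain i where i: "i \<in> NZ" "d = sg i" using d(2) unfolding S'_def by auto
  have iJ0: "i \<notin> J0" using d(3) i unfolding X_def by auto
  define I where "I = B - {d}"
  have r1: "1 \<le> r" using Bs d(1) fB by (metis One_nat_def Suc_leI card_gt_0_iff empty_iff)
  have I: "I \<subseteq> {1..n}" "card I = r - 1" unfolding I_def using Bs d(1) fB by auto
  have fI: "finite I" using I finn by auto
  define J where "J = insert i J0"
  have J: "J \<subseteq> {1..n}" "card J = k + 1" unfolding J_def using J0s i(1) NZsub iJ0 fJ0 by auto
  have AR: "\<forall>a\<in>J. h I J a \<noteq> \<infinity> \<longrightarrow> (\<exists>b\<in>J. b \<noteq> a \<and> h I J b \<le> h I J a)"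
    using A r1 I J unfolding ARR_def by blast
  have dI: "insert d I = B" unfolding I_def using d(1) by auto
  have Ji: "J - {i} = J0" unfolding J_def using iJ0 by auto
  have hi: "h I J i = W i + P B + Q J0" unfolding h_def using dI Ji i(2) by simp
  have "h I J i \<noteq> \<infinity>" unfolding hi using W_fin i(1) PB J0 by auto
  then obtain b where b: "b \<in> J" "b \<noteq> i" "h I J b \<le> h I J i" using AR J_def by blast
  have "h I J b \<noteq> \<infinity>" using b(3) \<open>h I J i \<noteq> \<infinity>\<close> by auto
  note hf = h_fin[OF this r1 I(2) fI]
  have bJ0: "b \<in> J0" using b J_def by auto
  define g where "g = sg b"
  have gX: "g \<in> X" unfolding g_def X_def using bJ0 hf(1) by auto
  have gd: "g \<noteq> d" using gX d(3) by auto
  have gB: "g \<notin> B" using hf(3) gd unfolding g_def I_def by auto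
  define B' where "B' = insert g I"
  have PB': "P B' \<noteq> \<infinity>" unfolding B'_def g_def using hf(4) .
  have gS: "g \<in> S'" using gX XS by auto
  have e1: "B' \<inter> S' = insert g (B \<inter> S' - {d})" unfolding B'_def I_def using gS by auto
  have "card (B \<inter> S') > 0" using fB d by (auto simp: card_gt_0_iff)
  then have c1: "card (B' \<inter> S') = rr" unfolding e1 using fB gB d cB by (simp add: card_Diff_singleton)
  have B'0: "B' \<in> B0" unfolding B0_def using PB' c1 by auto
  have e2: "B' \<inter> X = insert g (B \<inter> X)" unfolding B'_def I_def using gX d(3) by auto
  have "card (B' \<inter> X) = Suc a" unfolding e2 using gB fB cBX by simp
  then show False using amax[OF B'0] by simp
qed

lemma arr_to_c:
  assumes A: ARR
  shows QUOT
  unfolding quot_unf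
proof (intro conjI allI impI)
  show rk: "rr \<le> k" using arr_rr[OF A] .
  fix I J i
  assume H: "I \<subseteq> {0..n} \<and> card I = rr \<and> J \<subseteq> {0..n} \<and> card J = k \<and> i \<in> I - J"
  have fI: "finite I" using H by (meson finite_subset finite_atLeastAtMost)
  have fJ: "finite J" using H by (meson finite_subset finite_atLeastAtMost)
  have rr1: "1 \<le> rr" using H fI by (metis DiffD1 One_nat_def Suc_leI card_gt_0_iff empty_iff)
  show "\<exists>j\<in>J - I. G (insert j (I - {i})) + pointed Q (insert i (J - {j})) \<le> G I + pointed Q J"
  proof (cases "G I + pointed Q J = \<infinity>")
    case True
    have "J - I \<noteq> {}"
    proof
      assume "J - I = {}"
      then have "J \<subseteq> I - {i}" using H by auto
      then have "card J \<le> card (I - {i})" using fI by (intro card_mono) auto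
      then show False using H rr1 rk fI by auto
    qed
    then obtain j where "j \<in> J - I" by blast
    then show ?thesis using True by auto
  next
    case False
    have GIf: "G I \<noteq> \<infinity>" and QJf: "pointed Q J \<noteq> \<infinity>" using False by auto
    note gI = Gfin[OF GIf]
    have J0: "0 \<notin> J" "Q J \<noteq> \<infinity>" using QJf unfolding pointed_def by (auto split: if_splits)
    have Js: "J \<subseteq> {1..n}" using vm_fin(1)[OF vmQ J0(2)] .
    have iI: "i \<in> I" "i \<notin> J" using H by auto
    have iN: "i \<in> NZ" using gI(1) iI by auto
    define I2 where "I2 = I - {i}"
    define D where "D = sg ` I2"
    define d0 where "d0 = sg i"
    have I2N: "I2 \<subseteq> NZ" unfolding I2_def using gI by auto
    have fI2: "finite I2" unfolding I2_def using fI by auto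
    have injI2: "inj_on sg I2" unfolding I2_def using gI(2) by (rule inj_on_subset) auto
    have Ieq: "I = insert i I2" unfolding I2_def using iI by auto
    have iI2: "i \<notin> I2" unfolding I2_def by auto
    have d0D: "d0 \<notin> D" unfolding D_def d0_def I2_def using gI(2) iI by (auto simp: inj_on_def)
    have cI2: "card I2 = rr - 1" unfolding I2_def using H fI by auto
    define \<sigma> where "\<sigma> = (\<Sum>i\<in>I2. W i)"
    have \<sigma>f: "\<sigma> \<noteq> \<infinity>" "\<sigma> \<noteq> -\<infinity>" unfolding \<sigma>_def using W_sum_fin[OF I2N] by auto
    have sI: "(\<Sum>i\<in>I. W i) = W i + \<sigma>" unfolding \<sigma>_def Ieq using fI2 iI2 by simp
    have sgI: "sg ` I = insert d0 D" unfolding D_def d0_def Ieq by auto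
    have GI: "G I = R (insert d0 D) + W i + \<sigma>"
      using Gval[OF gI] unfolding sI sgI by (simp add: ac_simps)
    obtain C0 where C0: "C0 \<subseteq> T" "R (insert d0 D) = P (insert d0 D \<union> C0)" using R_att by blast
    have Rf: "R (insert d0 D) \<noteq> \<infinity>" using GIf unfolding GI by auto
    define I' where "I' = D \<union> C0"
    have dI': "insert d0 I' = insert d0 D \<union> C0" unfolding I'_def by auto
    have d0S: "d0 \<in> S'" unfolding d0_def S'_def using iN by auto
    have d0I': "d0 \<notin> I'" unfolding I'_def using d0D C0(1) d0S unfolding T_def by auto
    have Pf: "P (insert d0 I') \<noteq> \<infinity>" using Rf C0(2) dI' by simp
    have Ps: "insert d0 I' \<subseteq> {1..n}" "card (insert d0 I') = r" using vm_fin[OF vmP Pf] by auto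
    have fI': "finite I'" using Ps finn by auto
    have I's: "I' \<subseteq> {1..n}" "card I' = r - 1" using Ps d0I' fI' by auto
    have r1: "1 \<le> r" using Ps fI' d0I' by auto
    define J' where "J' = insert i J"
    have J's: "J' \<subseteq> {1..n}" "card J' = k + 1" unfolding J'_def using Js iN NZsub iI fJ H by auto
    have AR: "\<forall>a\<in>J'. h I' J' a \<noteq> \<infinity> \<longrightarrow> (\<exists>b\<in>J'. b \<noteq> a \<and> h I' J' b \<le> h I' J' a)"
      using A r1 I's J's unfolding ARR_def by blast
    have J'i: "J' - {i} = J" unfolding J'_def using iI by auto
    have hi: "h I' J' i = W i + R (insert d0 D) + Q J" unfolding h_def J'i d0_def[symmetric] dI' C0(2) ..
    have hif: "h I' J' i \<noteq> \<infinity>" unfolding hi using W_fin iN Rf J0 by auto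
    then obtain b where b: "b \<in> J'" "b \<noteq> i" "h I' J' b \<le> h I' J' i" using AR J'_def by blast
    have "h I' J' b \<noteq> \<infinity>" using b(3) hif by auto
    note hf = h_fin[OF this r1 I's(2) fI']
    have bJ: "b \<in> J" using b J'_def by auto
    have sbD: "sg b \<notin> D" using hf(3) unfolding I'_def by auto
    have bI2: "b \<notin> I2" using sbD unfolding D_def by auto
    have bI: "b \<notin> I" using bI2 b(2) Ieq by auto
    have bN: "insert b I2 \<subseteq> NZ" using hf(1) I2N by auto
    have binj: "inj_on sg (insert b I2)" using injI2 sbD unfolding D_def by auto
    have bc: "card (insert b I2) = rr" using cI2 bI2 fI2 rr1 by auto
    have sb: "(\<Sum>i\<in>insert b I2. W i) = W b + \<sigma>" unfolding \<sigma>_def using fI2 bI2 by simp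
    have sgb: "sg ` insert b I2 = insert (sg b) D" unfolding D_def by auto
    have Gb: "G (insert b I2) = R (insert (sg b) D) + W b + \<sigma>"
      using Gval[OF bN binj bc] unfolding sb sgb by (simp add: ac_simps)
    have Rb: "R (insert (sg b) D) \<le> P (insert (sg b) I')"
      using R_le[OF C0(1), of "insert (sg b) D"] unfolding I'_def by (simp add: insert_commute)
    have e1: "insert i (J - {b}) = J' - {b}" unfolding J'_def using b by auto
    have z: "0 \<notin> J' - {b}" using J's by auto
    have "G (insert b (I - {i})) + pointed Q (insert i (J - {b})) = G (insert b I2) + Q (J' - {b})"
      unfolding e1 Qo[OF z] I2_def ..
    also have "\<dots> = R (insert (sg b) D) + (W b + \<sigma> + Q (J' - {b}))" unfolding Gb by (simp add: ac_simps)
    also have "\<dots> \<le> P (insert (sg b) I') + (W b + \<sigma> + Q (J' - {b}))" using Rb by (rule add_right_mono)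
    also have "\<dots> = h I' J' b + \<sigma>" unfolding h_def by (simp add: ac_simps)
    also have "\<dots> \<le> h I' J' i + \<sigma>" using b(3) by (rule add_right_mono)
    also have "\<dots> = G I + pointed Q J" unfolding hi GI Qo[OF J0(1)] by (simp add: ac_simps)
    finally show ?thesis using bJ bI by blast
  qed
qed

lemma main_equiv:
  shows "(\<forall>I J. 1 \<le> r \<and> I \<subseteq> {1..n} \<and> card I = r - 1 \<and> J \<subseteq> {1..n} \<and> card J = k + 1 \<longrightarrow>
      min_twice (({1..n} - I) \<times> J) (\<lambda>(j, i). val (M i j) + P (insert j I) + Q (J - {i}))) \<longleftrightarrow>
    (\<forall>x\<in>trop_space {1..n} r P. (\<exists>i. trop_mat_vec val n M x i \<noteq> \<infinity>) \<longrightarrow>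
      trop_mat_vec val n M x \<in> trop_space {1..n} k Q)"
    and "(\<forall>I J. 1 \<le> r \<and> I \<subseteq> {1..n} \<and> card I = r - 1 \<and> J \<subseteq> {1..n} \<and> card J = k + 1 \<longrightarrow>
      min_twice (({1..n} - I) \<times> J) (\<lambda>(j, i). val (M i j) + P (insert j I) + Q (J - {i}))) \<longleftrightarrow>
    affine_morphism val n M k Q P"
proof -
  have "ARRQ \<longleftrightarrow> tropb" using arr_iff arr_to_b b_to_arr by blast
  then show "(\<forall>I J. 1 \<le> r \<and> I \<subseteq> {1..n} \<and> card I = r - 1 \<and> J \<subseteq> {1..n} \<and> card J = k + 1 \<longrightarrow>
      min_twice (({1..n} - I) \<times> J) (\<lambda>(j, i). val (M i j) + P (insert j I) + Q (J - {i}))) \<longleftrightarrow>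
    (\<forall>x\<in>trop_space {1..n} r P. (\<exists>i. trop_mat_vec val n M x i \<noteq> \<infinity>) \<longrightarrow>
      trop_mat_vec val n M x \<in> trop_space {1..n} k Q)"
    unfolding ARRQ_def tropb_def .
  have "ARRQ \<longleftrightarrow> QUOT" using arr_iff arr_to_c c_to_b b_to_arr by blast
  then show "(\<forall>I J. 1 \<le> r \<and> I \<subseteq> {1..n} \<and> card I = r - 1 \<and> J \<subseteq> {1..n} \<and> card J = k + 1 \<longrightarrow>
      min_twice (({1..n} - I) \<times> J) (\<lambda>(j, i). val (M i j) + P (insert j I) + Q (J - {i}))) \<longleftrightarrow>
    affine_morphism val n M k Q P"
    unfolding ARRQ_def QUOT_def .
qed

end

lemma vertex_pl:
  fixes n :: nat
  assumes vm: "valuated_matroid {1..n} r P" and "1 \<le> r" "I \<subseteq> {1..n}" "card I = r - 1"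
    "J \<subseteq> {1..n}" "card J = r + 1"
  shows "min_twice (J - I) (\<lambda>j. P (insert j I) + P (J - {j}))"
proof -
  have "finite J" using assms(5) by (meson finite_subset finite_atLeastAtMost)
  then have fJ: "finite (J - I)" by simp
  show ?thesis unfolding mt_iff[OF fJ] using pluecker[OF assms] by blast
qed

lemma conj3_iff: "A \<Longrightarrow> B \<Longrightarrow> (A \<and> B \<and> C \<longleftrightarrow> C)" by blast

theorem theoremB:
  fixes val :: "'k::field \<Rightarrow> ereal" and n :: nat
    and V :: "'v set" and Arr :: "'a set" and s t :: "'a \<Rightarrow> 'v"
    and A :: "'a \<Rightarrow> nat \<Rightarrow> nat \<Rightarrow> 'k" and d :: "'v \<Rightarrow> nat"
    and \<mu> :: "'v \<Rightarrow> nat set \<Rightarrow> ereal"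
  assumes "valuation val" and "1 \<le> n"
    and "finite V" and "finite Arr"
    and "\<forall>\<alpha>\<in>Arr. s \<alpha> \<in> V \<and> t \<alpha> \<in> V"
    and "\<forall>\<alpha>\<in>Arr. weakly_monomial n (A \<alpha>)"
    and "\<forall>i\<in>V. d i \<le> n"
    and "\<forall>i\<in>V. valuated_matroid {1..n} (d i) (\<mu> i)"
  shows "(QDr val n V Arr s t A d \<mu> \<longleftrightarrow>
           (\<forall>\<alpha>\<in>Arr. \<forall>x\<in>trop_space {1..n} (d (s \<alpha>)) (\<mu> (s \<alpha>)).
              (\<exists>i. trop_mat_vec val n (A \<alpha>) x i \<noteq> \<infinity>) \<longrightarrow>
              trop_mat_vec val n (A \<alpha>) x \<in> trop_space {1..n} (d (t \<alpha>)) (\<mu> (t \<alpha>))))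
       \<and> (QDr val n V Arr s t A d \<mu> \<longleftrightarrow>
           (\<forall>\<alpha>\<in>Arr. affine_morphism val n (A \<alpha>) (d (t \<alpha>)) (\<mu> (t \<alpha>)) (\<mu> (s \<alpha>))))"
proof -
  have loc: "arr val n (A \<alpha>) (\<mu> (s \<alpha>)) (\<mu> (t \<alpha>)) (d (s \<alpha>)) (d (t \<alpha>))" if "\<alpha> \<in> Arr" for \<alpha>
    using assms that by (intro arr.intro) auto
  have V1: "\<forall>i\<in>V. (\<forall>S. \<mu> i S \<noteq> -\<infinity>) \<and> (\<forall>S. \<not> (S \<subseteq> {1..n} \<and> card S = d i) \<longrightarrow> \<mu> i S = \<infinity>) \<and>
        (\<exists>S. \<mu> i S \<noteq> \<infinity>)"
    using assms(8) unfolding valuated_matroid_def by blast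
  have V2: "\<forall>i\<in>V. \<forall>I J. 1 \<le> d i \<and> I \<subseteq> {1..n} \<and> card I = d i - 1 \<and> J \<subseteq> {1..n} \<and> card J = d i + 1 \<longrightarrow>
        min_twice (J - I) (\<lambda>j. \<mu> i (insert j I) + \<mu> i (J - {j}))"
  proof (intro ballI allI impI)
    fix i I J assume iV: "i \<in> V"
      and H: "1 \<le> d i \<and> I \<subseteq> {1..n} \<and> card I = d i - 1 \<and> J \<subseteq> {1..n} \<and> card J = d i + 1"
    have vm: "valuated_matroid {1..n} (d i) (\<mu> i)" using assms(8) iV by blast
    show "min_twice (J - I) (\<lambda>j. \<mu> i (insert j I) + \<mu> i (J - {j}))"
      using vertex_pl[OF vm] H by blast
  qed
  have Q: "QDr val n V Arr s t A d \<mu> \<longleftrightarrow> (\<forall>\<alpha>\<in>Arr. \<forall>I J. 1 \<le> d (s \<alpha>) \<and> I \<subseteq> {1..n} \<and> card I = d (s \<alpha>) - 1 \<and>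
        J \<subseteq> {1..n} \<and> card J = d (t \<alpha>) + 1 \<longrightarrow>
        min_twice (({1..n} - I) \<times> J)
          (\<lambda>(j, i). val (A \<alpha> i j) + \<mu> (s \<alpha>) (insert j I) + \<mu> (t \<alpha>) (J - {i})))"
    unfolding QDr_def by (rule conj3_iff[OF V1 V2])
  have E1: "(\<forall>I J. 1 \<le> d (s \<alpha>) \<and> I \<subseteq> {1..n} \<and> card I = d (s \<alpha>) - 1 \<and>
        J \<subseteq> {1..n} \<and> card J = d (t \<alpha>) + 1 \<longrightarrow>
        min_twice (({1..n} - I) \<times> J)
          (\<lambda>(j, i). val (A \<alpha> i j) + \<mu> (s \<alpha>) (insert j I) + \<mu> (t \<alpha>) (J - {i}))) \<longleftrightarrow>
      (\<forall>x\<in>trop_space {1..n} (d (s \<alpha>)) (\<mu> (s \<alpha>)).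
              (\<exists>i. trop_mat_vec val n (A \<alpha>) x i \<noteq> \<infinity>) \<longrightarrow>
              trop_mat_vec val n (A \<alpha>) x \<in> trop_space {1..n} (d (t \<alpha>)) (\<mu> (t \<alpha>)))"
    if "\<alpha> \<in> Arr" for \<alpha>
    by (rule arr.main_equiv(1)[OF loc[OF that]])
  have E2: "(\<forall>I J. 1 \<le> d (s \<alpha>) \<and> I \<subseteq> {1..n} \<and> card I = d (s \<alpha>) - 1 \<and>
        J \<subseteq> {1..n} \<and> card J = d (t \<alpha>) + 1 \<longrightarrow>
        min_twice (({1..n} - I) \<times> J)
          (\<lambda>(j, i). val (A \<alpha> i j) + \<mu> (s \<alpha>) (insert j I) + \<mu> (t \<alpha>) (J - {i}))) \<longleftrightarrow>
      affine_morphism val n (A \<alpha>) (d (t \<alpha>)) (\<mu> (t \<alpha>)) (\<mu> (s \<alpha>))"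
    if "\<alpha> \<in> Arr" for \<alpha>
    by (rule arr.main_equiv(2)[OF loc[OF that]])
  show ?thesis unfolding Q using ball_cong[OF refl E1] ball_cong[OF refl E2] by (intro conjI)
qed

end
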